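(* Let $\alpha\ge 0$ and let $u_0,v_0,c\in\mathcal C([0,1])$ with $u_0,v_0\ge 0$ and $0<\underline c\le c(x)\le\overline c$ on $[0,1]$, where $\underline c,\overline c$ are constants. Assume either that $u_0(0)=0$ and $v_0(1)=0$ (case (DBC)), or that $u_0(0)=u_0(1)$, $v_0(0)=v_0(1)$ and $c(0)=c(1)$ (case (PBC)). Then the corresponding problem (system (S) with the (DBC), resp. (PBC), boundary conditions and initial data $u(\cdot,0)=u_0$, $v(\cdot,0)=v_0$) has a unique global mild solution $(u,v)$, and it satisfies, for all $x\in[0,1]$, $t\ge 0$, $$0\le u(x,t)\le \frac{\overline c}{\underline c}\max\Big\{\max_{[0,1]}u_0,\ \alpha\Big\},\qquad 0\le v(x,t)\le \frac{\overline c}{\underline c}\max\Big\{\max_{[0,1]}v_0,\ \alpha\Big\}.$$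
   Context: System (S): for $x\in[0,1]$, $t>0$, $$\partial_t u+\partial_x(c(x)u)=\frac{\alpha v}{1+u+v}-u,\qquad \partial_t v-\partial_x(c(x)v)=\frac{\alpha u}{1+u+v}-v.$$ Boundary conditions: (DBC) $u(0,t)=0$, $v(1,t)=0$ for $t>0$; (PBC) $u(0,t)=u(1,t)$, $v(0,t)=v(1,t)$ for $t>0$ (with $c$ periodic). Mild solutions: define $\frac1C=\int_0^1\frac{dx}{c(x)}$, the change of variable $X(x)=C\int_0^x\frac{d\xi}{c(\xi)}\in[0,1]$ (a homeomorphism of $[0,1]$), $\beta(X)=C/c(x)$ where $X=X(x)$, and $U_0(X)=c(x)u_0(x)/C$, $V_0(X)=c(x)v_0(x)/C$. For functions $U,V$ set $R_{U,V}(X,t)=\frac{\alpha V(X,t)}{1+\beta(X)(U(X,t)+V(X,t))}$ and $R_{V,U}(X,t)=\frac{\alpha U(X,t)}{1+\beta(X)(U(X,t)+V(X,t))}$. For (PBC), $(U,V)\in\mathcal C(\mathbb T^1\times[0,\infty))^2$ (with $\mathbb T^1=[0,1]$ with endpoints identified, arguments taken mod 1) is required to satisfy $U(X,t)=U_0(X-Ct)e^{-t}+\int_0^t e^{s-t}R_{U,V}(X+C(s-t),s)\,ds$, $V(X,t)=V_0(X+Ct)e^{-t}+\int_0^t e^{s-t}R_{V,U}(X-C(s-t),s)\,ds$. For (DBC), $(U,V)\in\mathcal C([0,1]\times[0,\infty))^2$ is required to satisfy $U(X,t)=U_0(X-Ct)H(X-Ct)e^{-t}+\int_{(t-X/C)_+}^t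 e^{s-t}R_{U,V}(X+C(s-t),s)\,ds$, $V(X,t)=V_0(X+Ct)H(1-X-Ct)e^{-t}+\int_{(t-(1-X)/C)_+}^t e^{s-t}R_{V,U}(X-C(s-t),s)\,ds$, with $H$ the Heaviside function. In either case $(u(x,t),v(x,t))=\frac{C}{c(x)}(U(X(x),t),V(X(x),t))$ is called a global mild solution. *)

theory Defs
  imports "HOL-Analysis.Analysis"
begin

datatype bcond = DBC | PBC

definition Cc :: "(real \<Rightarrow> real) \<Rightarrow> real" where
  "Cc c = 1 / integral {0..1} (\<lambda>x. 1 / c x)"

definition Xmap :: "(real \<Rightarrow> real) \<Rightarrow> real \<Rightarrow> real" where
  "Xmap c x = Cc c * integral {0..x} (\<lambda>\<xi>. 1 / c \<xi>)"

definition Xinv :: "(real \<Rightarrow> real) \<Rightarrow> real \<Rightarrow> real" where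
  "Xinv c = inv_into {0..1} (Xmap c)"

definition beta :: "(real \<Rightarrow> real) \<Rightarrow> real \<Rightarrow> real" where
  "beta c X = Cc c / c (Xinv c X)"

definition init_tr :: "(real \<Rightarrow> real) \<Rightarrow> (real \<Rightarrow> real) \<Rightarrow> real \<Rightarrow> real" where
  "init_tr c u0 X = c (Xinv c X) * u0 (Xinv c X) / Cc c"

definition Rf :: "real \<Rightarrow> (real \<Rightarrow> real) \<Rightarrow> (real \<Rightarrow> real \<Rightarrow> real) \<Rightarrow> (real \<Rightarrow> real \<Rightarrow> real)
    \<Rightarrow> real \<Rightarrow> real \<Rightarrow> real" where
  "Rf \<alpha> c P Q X t = \<alpha> * Q X t / (1 + beta c X * (P X t + Q X t))"

definition compat :: "bcond \<Rightarrow> (real \<Rightarrow> real) \<Rightarrow> (real \<Rightarrow> real) \<Rightarrow> (real \<Rightarrow> real) \<Rightarrow> bool" where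
  "compat bc c u0 v0 = (case bc of
      DBC \<Rightarrow> u0 0 = 0 \<and> v0 1 = 0
    | PBC \<Rightarrow> u0 0 = u0 1 \<and> v0 0 = v0 1 \<and> c 0 = c 1)"

text \<open>(U,V) is a global mild solution (in the transformed variables X in [0,1], t >= 0).
  For PBC, continuity on the torus T^1 x [0,oo) is continuity on [0,1] x [0,oo) together
  with U(0,t) = U(1,t); arguments are taken mod 1 via frac.\<close>
definition mild_sol :: "bcond \<Rightarrow> real \<Rightarrow> (real \<Rightarrow> real) \<Rightarrow> (real \<Rightarrow> real) \<Rightarrow> (real \<Rightarrow> real)
    \<Rightarrow> (real \<Rightarrow> real \<Rightarrow> real) \<Rightarrow> (real \<Rightarrow> real \<Rightarrow> real) \<Rightarrow> bool" where
  "mild_sol bc \<alpha> c u0 v0 U V =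
    (let C = Cc c; U0 = init_tr c u0; V0 = init_tr c v0 in
     continuous_on ({0..1} \<times> {0..}) (\<lambda>(X, t). U X t) \<and>
     continuous_on ({0..1} \<times> {0..}) (\<lambda>(X, t). V X t) \<and>
     (case bc of
       PBC \<Rightarrow>
         (\<forall>t\<ge>0. U 0 t = U 1 t \<and> V 0 t = V 1 t) \<and>
         (\<forall>X\<in>{0..1}. \<forall>t\<ge>0.
            U X t = U0 (frac (X - C * t)) * exp (- t)
               + integral {0..t} (\<lambda>s. exp (s - t) * Rf \<alpha> c U V (frac (X + C * (s - t))) s) \<and>
            V X t = V0 (frac (X + C * t)) * exp (- t)
               + integral {0..t} (\<lambda>s. exp (s - t) * Rf \<alpha> c V U (frac (X - C * (s - t))) s))
     | DBC \<Rightarrow>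
         (\<forall>X\<in>{0..1}. \<forall>t\<ge>0.
            U X t = (if X - C * t \<ge> 0 then U0 (X - C * t) else 0) * exp (- t)
               + integral {max 0 (t - X / C)..t} (\<lambda>s. exp (s - t) * Rf \<alpha> c U V (X + C * (s - t)) s) \<and>
            V X t = (if 1 - X - C * t \<ge> 0 then V0 (X + C * t) else 0) * exp (- t)
               + integral {max 0 (t - (1 - X) / C)..t} (\<lambda>s. exp (s - t) * Rf \<alpha> c V U (X - C * (s - t)) s))))"

definition phys :: "(real \<Rightarrow> real) \<Rightarrow> (real \<Rightarrow> real \<Rightarrow> real) \<Rightarrow> real \<Rightarrow> real \<Rightarrow> real" where
  "phys c U x t = Cc c / c x * U (Xmap c x) t"

end

theory Submission
  imports Defs
begin


lemma integral_rescale01: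
  fixes f :: "real \<Rightarrow> real"
  assumes "a \<le> b" "continuous_on {a..b} f"
  shows "integral {a..b} f = (b - a) * integral {0..1} (\<lambda>\<theta>. f ((b - a) * \<theta> + a))"
proof (cases "a = b")
  case True then show ?thesis by simp
next
  case False
  then have m: "b - a > 0" using assms by simp
  have "(f has_integral integral {a..b} f) (cbox a b)"
    using integrable_continuous_interval[OF assms(2)] by (simp add: has_integral_integral)
  from has_integral_affinity'[OF this m, of a]
  have "((\<lambda>x. f ((b - a) * x + a)) has_integral (integral {a..b} f / (b - a))) (cbox 0 1)"
    using m by (simp add: divide_inverse mult.commute)
  then have "integral {0..1} (\<lambda>\<theta>. f ((b - a) * \<theta> + a)) = integral {a..b} f / (b - a)"
    by (simp add: integral_unique)
  then show ?thesis using m by simp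
qed

lemma cont_param_integral:
  fixes g :: "'a::topological_space \<Rightarrow> real \<Rightarrow> real"
  assumes lo: "continuous_on UNIV lo" and hi: "continuous_on UNIV hi" and le: "\<And>p. lo p \<le> hi p"
    and g: "continuous_on UNIV (\<lambda>(p,s). g p s)"
  shows "continuous_on UNIV (\<lambda>p. integral {lo p..hi p} (g p))"
proof -
  have gp: "continuous_on S (g p)" for p S
  proof -
    have "continuous_on S ((\<lambda>(p,s). g p s) \<circ> (\<lambda>s. (p, s)))"
      by (rule continuous_on_compose) (auto intro!: continuous_intros continuous_on_subset[OF g])
    then show ?thesis by (simp add: o_def)
  qed
  have eq: "integral {lo p..hi p} (g p) = (hi p - lo p) * integral {0..1} (\<lambda>\<theta>. g p ((hi p - lo p) * \<theta> + lo p))" for p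
    by (rule integral_rescale01[OF le gp])
  have c2: "continuous_on (UNIV \<times> cbox 0 1) (\<lambda>(p, \<theta>). g p ((hi p - lo p) * \<theta> + lo p))"
  proof -
    have "continuous_on (UNIV \<times> cbox 0 1) ((\<lambda>(p,s). g p s) \<circ> (\<lambda>(p, \<theta>). (p, (hi p - lo p) * \<theta> + lo p)))"
      apply (rule continuous_on_compose)
       prefer 2 apply (rule continuous_on_subset[OF g], simp)
      apply (auto intro!: continuous_intros simp: split_beta)
        apply (rule continuous_on_compose2[OF hi]; auto intro!: continuous_intros)
       apply (rule continuous_on_compose2[OF lo]; auto intro!: continuous_intros)
      apply (rule continuous_on_compose2[OF lo]; auto intro!: continuous_intros)
      done
    then show ?thesis by (simp add: o_def split_beta)
  qed
  have "continuous_on UNIV (\<lambda>p. (hi p - lo p) * integral (cbox 0 1) (\<lambda>\<theta>. g p ((hi p - lo p) * \<theta> + lo p)))"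
    by (intro continuous_intros lo hi integral_continuous_on_param[OF c2])
  then show ?thesis by (simp add: eq)
qed


lemma frac_shift_piece:
  fixes f :: "real \<Rightarrow> real \<Rightarrow> real" and n :: int
  assumes f: "continuous_on ({0..1} \<times> T) (\<lambda>(y,s). f y s)" and per: "\<forall>s\<in>T. f 0 s = f 1 s"
  shows "continuous_on ({real_of_int n..real_of_int n + 1} \<times> T) (\<lambda>(y,s). f (frac y) s)"
proof -
  have cont: "continuous_on ({real_of_int n..real_of_int n + 1} \<times> T) ((\<lambda>(y,s). f y s) \<circ> (\<lambda>(y,s). (y - real_of_int n, s)))"
    by (rule continuous_on_compose[OF _ continuous_on_subset[OF f]]) (auto intro!: continuous_intros simp: split_beta)
  have eq: "f (frac y) s = f (y - real_of_int n) s"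
    if "y \<in> {real_of_int n..real_of_int n + 1}" "s \<in> T" for y s
  proof (cases "y = real_of_int n + 1")
    case True
    then have "frac y = 0" by (simp add: frac_def)
    then show ?thesis using True per that by simp
  next
    case False
    then have "frac y = y - real_of_int n"
      using that by (subst frac_unique_iff) auto
    then show ?thesis by simp
  qed
  show ?thesis
    apply (rule continuous_on_eq[OF cont]) using eq by auto
qed

lemma cont_frac2:
  fixes f :: "real \<Rightarrow> real \<Rightarrow> real"
  assumes f: "continuous_on ({0..1} \<times> T) (\<lambda>(y,s). f y s)" and per: "\<forall>s\<in>T. f 0 s = f 1 s"
    and T: "closed T"
  shows "continuous_on ((UNIV::real set) \<times> T) (\<lambda>(y,s). f (frac y) s)"
proof (rule continuous_on_eq_continuous_within[THEN iffD2], intro ballI)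
  fix p :: "real \<times> real" assume p: "p \<in> UNIV \<times> T"
  obtain x s :: real where ps: "p = (x, s)" by force
  define n where "n = floor x"
  define U where "U = {real_of_int (n - 1)..real_of_int n + 1} \<times> T"
  have U: "U = ({real_of_int (n - 1)..real_of_int (n - 1) + 1} \<times> T) \<union> ({real_of_int n..real_of_int n + 1} \<times> T)"
    unfolding U_def by auto
  have "continuous_on U (\<lambda>(y,s). f (frac y) s)"
    unfolding U
    by (intro continuous_on_closed_Un frac_shift_piece[OF f per] closed_Times T) auto
  moreover have pU: "p \<in> U" using p ps unfolding U_def n_def
    by (auto, linarith+)
  ultimately have "continuous (at p within U) (\<lambda>(y,s). f (frac y) s)"
    using continuous_on_eq_continuous_within by blast
  moreover have "at p within (UNIV \<times> T) = at p within U"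
    apply (rule at_within_nhd[where S="{real_of_int (n - 1)<..<real_of_int n + 1} \<times> UNIV"])
    using p ps unfolding n_def U_def
      apply (auto intro!: open_Times)
    by linarith
  ultimately show "continuous (at p within UNIV \<times> T) (\<lambda>(y,s). f (frac y) s)" by simp
qed


locale setting =
  fixes c :: "real \<Rightarrow> real" and cl cu :: real
  assumes cc: "continuous_on {0..1} c" and cl: "0 < cl" and cb: "\<And>x. x \<in> {0..1} \<Longrightarrow> cl \<le> c x \<and> c x \<le> cu"
begin

lemma c_pos: "x \<in> {0..1} \<Longrightarrow> c x > 0" using cb cl by force

lemma cl_cu: "cl \<le> cu" using cb[of 0] by auto

lemma inv_cont: "continuous_on {0..1} (\<lambda>x. 1 / c x)"
  by (intro continuous_intros cc) (metis atLeastAtMost_iff c_pos less_irrefl)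

lemma inv_int: "(\<lambda>x. 1 / c x) integrable_on {a..b}" if "0 \<le> a" "b \<le> 1"
  by (rule integrable_continuous_interval, rule continuous_on_subset[OF inv_cont]) (use that in auto)

lemma int_lower: assumes "0 \<le> a" "a \<le> b" "b \<le> 1"
  shows "(b - a) / cu \<le> integral {a..b} (\<lambda>x. 1 / c x)"
proof -
  have "integral {a..b} (\<lambda>x. 1 / cu) \<le> integral {a..b} (\<lambda>x. 1 / c x)"
    apply (rule integral_le) using assms inv_int[of a b] apply auto
    apply (rule divide_left_mono) using cb c_pos cl_cu cl by auto
  then show ?thesis using assms by simp
qed

lemma int_upper: assumes "0 \<le> a" "a \<le> b" "b \<le> 1"
  shows "integral {a..b} (\<lambda>x. 1 / c x) \<le> (b - a) / cl"
proof -
  have "integral {a..b} (\<lambda>x. 1 / c x) \<le> integral {a..b} (\<lambda>x. 1 / cl)"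
    apply (rule integral_le) using assms inv_int[of a b] apply auto
    apply (rule divide_left_mono) using cb c_pos cl_cu cl by auto
  then show ?thesis using assms by simp
qed

definition "C = Cc c"

lemma C_bounds: "cl \<le> C" "C \<le> cu" "C > 0"
proof -
  have l: "1 / cu \<le> integral {0..1} (\<lambda>x. 1 / c x)" using int_lower[of 0 1] by simp
  have u: "integral {0..1} (\<lambda>x. 1 / c x) \<le> 1 / cl" using int_upper[of 0 1] by simp
  have cu: "cu > 0" using cl cl_cu by simp
  have ip: "integral {0..1} (\<lambda>x. 1 / c x) > 0" using l cu by (smt (verit) divide_pos_pos)
  show "cl \<le> C" unfolding C_def Cc_def using u ip cl
    by (simp add: pos_le_divide_eq mult.commute)
  show "C \<le> cu" unfolding C_def Cc_def using l ip cu
    using cu by (simp add: pos_divide_le_eq pos_le_divide_eq mult.commute)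
  show "C > 0" unfolding C_def Cc_def using ip by simp
qed

lemma Xmap_eq: "Xmap c x = C * integral {0..x} (\<lambda>\<xi>. 1 / c \<xi>)"
  unfolding Xmap_def C_def ..

lemma Xmap_0: "Xmap c 0 = 0" by (simp add: Xmap_eq)
lemma Xmap_1: "Xmap c 1 = 1"
  using C_bounds unfolding Xmap_def Cc_def by (simp add: C_def Cc_def)

lemma Xmap_cont: "continuous_on {0..1} (Xmap c)"
  unfolding Xmap_eq
  by (intro continuous_intros indefinite_integral_continuous_1 inv_int) auto

lemma Xmap_strict: assumes "0 \<le> x" "x < y" "y \<le> 1" shows "Xmap c x < Xmap c y"
proof -
  have "integral {0..x} (\<lambda>\<xi>. 1 / c \<xi>) + integral {x..y} (\<lambda>\<xi>. 1 / c \<xi>) = integral {0..y} (\<lambda>\<xi>. 1 / c \<xi>)"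
    by (rule Henstock_Kurzweil_Integration.integral_combine) (use assms inv_int[of 0 y] in auto)
  moreover have "(y - x) / cu \<le> integral {x..y} (\<lambda>\<xi>. 1 / c \<xi>)" by (rule int_lower) (use assms in auto)
  moreover have "(y - x) / cu > 0" using assms cl cl_cu by simp
  ultimately show ?thesis unfolding Xmap_eq using C_bounds
    by (smt (verit) mult_strict_left_mono)
qed

lemma Xmap_inj: "inj_on (Xmap c) {0..1}"
  by (rule inj_onI) (metis Xmap_strict atLeastAtMost_iff linorder_neqE_linordered_idom order_less_irrefl)

lemma Xmap_range: "x \<in> {0..1} \<Longrightarrow> Xmap c x \<in> {0..1}"
  using Xmap_strict[of 0 x] Xmap_strict[of x 1] Xmap_0 Xmap_1
  by (cases "x = 0"; cases "x = 1") auto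

lemma Xmap_image: "Xmap c ` {0..1} = {0..1}"
proof
  show "Xmap c ` {0..1} \<subseteq> {0..1}" using Xmap_range by auto
  show "{0..1} \<subseteq> Xmap c ` {0..1}"
  proof
    fix X :: real assume "X \<in> {0..1}"
    then obtain x where "0 \<le> x" "x \<le> 1" "Xmap c x = X"
      using IVT'[of "Xmap c" 0 X 1] Xmap_0 Xmap_1 Xmap_cont by auto
    then show "X \<in> Xmap c ` {0..1}" by force
  qed
qed

lemma Xinv_range: "X \<in> {0..1} \<Longrightarrow> Xinv c X \<in> {0..1}"
  unfolding Xinv_def by (metis Xmap_image inv_into_into)

lemma Xinv_range': "0 \<le> X \<Longrightarrow> X \<le> 1 \<Longrightarrow> 0 \<le> Xinv c X \<and> Xinv c X \<le> 1"
  using Xinv_range[of X] by auto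

lemma Xmap_Xinv: "X \<in> {0..1} \<Longrightarrow> Xmap c (Xinv c X) = X"
  unfolding Xinv_def by (metis Xmap_image f_inv_into_f)

lemma Xinv_Xmap: "x \<in> {0..1} \<Longrightarrow> Xinv c (Xmap c x) = x"
  unfolding Xinv_def by (metis Xmap_inj inv_into_f_f)

lemma Xinv_0: "Xinv c 0 = 0" using Xinv_Xmap[of 0] Xmap_0 by simp
lemma Xinv_1: "Xinv c 1 = 1" using Xinv_Xmap[of 1] Xmap_1 by simp

lemma Xinv_cont: "continuous_on {0..1} (Xinv c)"
  using continuous_on_inv[OF Xmap_cont compact_Icc, of "Xinv c"] Xinv_Xmap Xmap_image by auto

lemma beta_bounds: assumes "X \<in> {0..1}" shows "C / cu \<le> beta c X \<and> beta c X \<le> C / cl"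
proof -
  have b: "beta c X = C / c (Xinv c X)" unfolding beta_def C_def ..
  have "cl \<le> c (Xinv c X)" "c (Xinv c X) \<le> cu" using cb[OF Xinv_range[OF assms]] by auto
  then show ?thesis unfolding b using C_bounds cl
    by (auto intro!: divide_left_mono)
qed

lemma beta_pos: "X \<in> {0..1} \<Longrightarrow> beta c X > 0"
proof -
  assume X: "X \<in> {0..1}"
  have "C / cu > 0" using C_bounds cl cl_cu by simp
  then show ?thesis using beta_bounds[OF X] by linarith
qed

lemma beta_cont: "continuous_on {0..1} (beta c)"
  unfolding beta_def
  by (intro continuous_intros continuous_on_compose2[OF cc Xinv_cont])
     (auto simp: Xinv_range' dest: c_pos[OF Xinv_range])

lemma init_cont: "continuous_on {0..1} f \<Longrightarrow> continuous_on {0..1} (init_tr c f)"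
  unfolding init_tr_def
  by (intro continuous_intros continuous_on_compose2[OF cc Xinv_cont] continuous_on_compose2[of "{0..1}" f, OF _ Xinv_cont])
     (use C_bounds in \<open>auto simp: Xinv_range' C_def\<close>)

lemma init_nonneg: "(\<And>x. x \<in> {0..1} \<Longrightarrow> f x \<ge> 0) \<Longrightarrow> X \<in> {0..1} \<Longrightarrow> init_tr c f X \<ge> 0"
  unfolding init_tr_def C_def[symmetric] using C_bounds c_pos[OF Xinv_range, of X] Xinv_range[of X] by auto

lemma init_upper: "(\<And>x. x \<in> {0..1} \<Longrightarrow> 0 \<le> f x \<and> f x \<le> M) \<Longrightarrow> X \<in> {0..1} \<Longrightarrow> init_tr c f X \<le> cu * M / C"
  unfolding init_tr_def C_def[symmetric] using C_bounds Xinv_range[of X] cb[OF Xinv_range[of X]]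
  by (intro divide_right_mono mult_mono) auto

end


lemma norm_pair_le: "norm (a::real, b::real) \<le> \<bar>a\<bar> + \<bar>b\<bar>"
proof -
  have "sqrt (a\<^sup>2 + b\<^sup>2) \<le> sqrt ((\<bar>a\<bar> + \<bar>b\<bar>)\<^sup>2)"
    by (rule real_sqrt_le_mono) (simp add: power2_sum)
  then show ?thesis by (simp add: norm_Pair)
qed

definition P01 :: "real \<Rightarrow> real" where "P01 x = max 0 (min 1 x)"

lemma P01_range: "0 \<le> P01 x" "P01 x \<le> 1" by (auto simp: P01_def)
lemma P01_id: "x \<in> {0..1} \<Longrightarrow> P01 x = x" by (auto simp: P01_def)
lemma P01_cont[continuous_intros]: "continuous_on S f \<Longrightarrow> continuous_on S (\<lambda>x. P01 (f x))"
  unfolding P01_def by (intro continuous_intros)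

lemma cont_frac1:
  fixes f :: "real \<Rightarrow> real"
  assumes "continuous_on {0..1} f" "f 0 = f 1"
  shows "continuous_on UNIV (\<lambda>y. f (frac y))"
proof -
  have c0: "continuous_on ({0..1} \<times> (UNIV::real set)) (\<lambda>p. f (fst p))"
    by (rule continuous_on_compose2[OF assms(1) continuous_on_fst]) auto
  have c1: "continuous_on ({0..1} \<times> UNIV) (\<lambda>(y,s::real). f y)"
    using c0 by (simp add: split_beta)
  have "continuous_on ((UNIV::real set) \<times> UNIV) (\<lambda>(y,s). (\<lambda>y (s::real). f y) (frac y) s)"
    by (rule cont_frac2) (use c1 assms(2) in auto)
  then have c2: "continuous_on ((UNIV::real set) \<times> UNIV) (\<lambda>(y,s::real). f (frac y))" by simp
  have "continuous_on UNIV (\<lambda>y. (\<lambda>(y,s::real). f (frac y)) (y, 0::real))"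
    by (rule continuous_on_compose2[OF c2 continuous_on_Pair[OF continuous_on_id continuous_on_const]]) simp
  then show ?thesis by (simp only: case_prod_conv)
qed

locale prob = setting +
  fixes bc :: bcond and \<alpha> :: real and u0 v0 :: "real \<Rightarrow> real"
  assumes alpha: "\<alpha> \<ge> 0"
    and u0c: "continuous_on {0..1} u0" and v0c: "continuous_on {0..1} v0"
    and u0v0: "\<And>x. x \<in> {0..1} \<Longrightarrow> u0 x \<ge> 0 \<and> v0 x \<ge> 0"
    and compat: "compat bc c u0 v0"
begin

definition "U0 = init_tr c u0"
definition "V0 = init_tr c v0"

lemma U0_cont: "continuous_on {0..1} U0" unfolding U0_def by (rule init_cont[OF u0c])
lemma V0_cont: "continuous_on {0..1} V0" unfolding V0_def by (rule init_cont[OF v0c])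
lemma U0_nonneg: "X \<in> {0..1} \<Longrightarrow> U0 X \<ge> 0" unfolding U0_def by (rule init_nonneg) (use u0v0 in auto)
lemma V0_nonneg: "X \<in> {0..1} \<Longrightarrow> V0 X \<ge> 0" unfolding V0_def by (rule init_nonneg) (use u0v0 in auto)

lemma U0_at: "U0 0 = c 0 * u0 0 / C" "U0 1 = c 1 * u0 1 / C"
  unfolding U0_def init_tr_def C_def by (simp_all add: Xinv_0 Xinv_1)
lemma V0_at: "V0 0 = c 0 * v0 0 / C" "V0 1 = c 1 * v0 1 / C"
  unfolding V0_def init_tr_def C_def by (simp_all add: Xinv_0 Xinv_1)
lemma beta_at: "beta c 0 = C / c 0" "beta c 1 = C / c 1"
  unfolding beta_def C_def by (simp_all add: Xinv_0 Xinv_1)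

lemma PBC_facts: "bc = PBC \<Longrightarrow> U0 0 = U0 1 \<and> V0 0 = V0 1 \<and> beta c 0 = beta c 1"
  using compat by (simp add: compat_def U0_at V0_at beta_at)

lemma DBC_facts: "bc = DBC \<Longrightarrow> U0 0 = 0 \<and> V0 1 = 0"
  using compat by (simp add: compat_def U0_at V0_at)

definition "Su = Sup (u0 ` {0..1})"
definition "Sv = Sup (v0 ` {0..1})"

lemma u0_le: "x \<in> {0..1} \<Longrightarrow> u0 x \<le> Su"
  unfolding Su_def
  by (rule cSup_upper) (auto intro!: bounded_imp_bdd_above compact_imp_bounded compact_continuous_image u0c)
lemma v0_le: "x \<in> {0..1} \<Longrightarrow> v0 x \<le> Sv"
  unfolding Sv_def
  by (rule cSup_upper) (auto intro!: bounded_imp_bdd_above compact_imp_bounded compact_continuous_image v0c)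

definition "Mu = cu / C * max Su \<alpha>"
definition "Mv = cu / C * max Sv \<alpha>"

lemma cu_pos: "cu > 0" using cl cl_cu by simp

lemma U0_le: "X \<in> {0..1} \<Longrightarrow> U0 X \<le> Mu"
proof -
  assume X: "X \<in> {0..1}"
  have "U0 X \<le> cu * Su / C" unfolding U0_def by (rule init_upper[OF _ X]) (use u0v0 u0_le in auto)
  also have "\<dots> \<le> Mu"
  proof -
    have "cu / C \<ge> 0" using C_bounds cu_pos by simp
    then have "cu / C * Su \<le> cu / C * max Su \<alpha>" by (intro mult_left_mono) auto
    then show ?thesis unfolding Mu_def by simp
  qed
  finally show ?thesis .
qed
lemma V0_le: "X \<in> {0..1} \<Longrightarrow> V0 X \<le> Mv"
proof -
  assume X: "X \<in> {0..1}"
  have "V0 X \<le> cu * Sv / C" unfolding V0_def by (rule init_upper[OF _ X]) (use u0v0 v0_le in auto)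
  also have "\<dots> \<le> Mv"
  proof -
    have "cu / C \<ge> 0" using C_bounds cu_pos by simp
    then have "cu / C * Sv \<le> cu / C * max Sv \<alpha>" by (intro mult_left_mono) auto
    then show ?thesis unfolding Mv_def by simp
  qed
  finally show ?thesis .
qed

lemma Mu_ge: "\<alpha> * cu / C \<le> Mu" "0 \<le> Mu"
  unfolding Mu_def using C_bounds cu_pos alpha u0_le[of 0] u0v0[of 0]
  by (auto simp: mult.commute[of \<alpha>] intro!: divide_right_mono mult_left_mono)
lemma Mv_ge: "\<alpha> * cu / C \<le> Mv" "0 \<le> Mv"
  unfolding Mv_def using C_bounds cu_pos alpha v0_le[of 0] u0v0[of 0]
  by (auto simp: mult.commute[of \<alpha>] intro!: divide_right_mono mult_left_mono)

definition "bt y = (if bc = PBC then beta c (frac y) else beta c (P01 y))"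
definition "U0e y = (if bc = PBC then U0 (frac y) else if y \<ge> 0 then U0 (min 1 y) else 0)"
definition "V0e y = (if bc = PBC then V0 (frac y) else if y \<le> 1 then V0 (max 0 y) else 0)"

lemma frac_in: "frac y \<in> {0..1}" using frac_lt_1[of y] by auto

lemma bt_bounds: "C / cu \<le> bt y \<and> bt y \<le> C / cl"
  unfolding bt_def using beta_bounds[OF frac_in] beta_bounds[of "P01 y"] P01_range[of y] by auto

lemma bt_nonneg[simp]: "bt y \<ge> 0"
proof -
  have "C / cu \<ge> 0" using C_bounds cu_pos by simp
  then show ?thesis using bt_bounds[of y] by linarith
qed

lemma bt_cont: "continuous_on UNIV bt"
proof (cases "bc = PBC")
  case True
  then show ?thesis unfolding bt_def using cont_frac1[OF beta_cont] PBC_facts by simp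
next
  case False
  then show ?thesis unfolding bt_def
    by (simp, intro continuous_on_compose2[OF beta_cont] continuous_intros) (auto simp: P01_range)
qed

lemma U0e_cont: "continuous_on UNIV U0e"
proof (cases "bc = PBC")
  case True
  then show ?thesis unfolding U0e_def using cont_frac1[OF U0_cont] PBC_facts by simp
next
  case False
  then have "bc = DBC" by (cases bc) auto
  then have z: "U0 0 = 0" using DBC_facts by simp
  have "continuous_on UNIV (\<lambda>y. U0 (P01 y))"
    by (intro continuous_on_compose2[OF U0_cont] continuous_intros) (auto simp: P01_range)
  moreover have "U0e y = U0 (P01 y)" for y
    using False z by (auto simp: U0e_def P01_def)
  ultimately show ?thesis by simp
qed

lemma V0e_cont: "continuous_on UNIV V0e"
proof (cases "bc = PBC")
  case True
  then show ?thesis unfolding V0e_def using cont_frac1[OF V0_cont] PBC_facts by simp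
next
  case False
  then have "bc = DBC" by (cases bc) auto
  then have z: "V0 1 = 0" using DBC_facts by simp
  have "continuous_on UNIV (\<lambda>y. V0 (P01 y))"
    by (intro continuous_on_compose2[OF V0_cont] continuous_intros) (auto simp: P01_range)
  moreover have "V0e y = V0 (P01 y)" for y
    using False z by (auto simp: V0e_def P01_def)
  ultimately show ?thesis by simp
qed

lemma bt_cont'[continuous_intros]: "continuous_on S f \<Longrightarrow> continuous_on S (\<lambda>x. bt (f x))"
  by (rule continuous_on_compose2[OF bt_cont]) auto
lemma U0e_cont'[continuous_intros]: "continuous_on S f \<Longrightarrow> continuous_on S (\<lambda>x. U0e (f x))"
  by (rule continuous_on_compose2[OF U0e_cont]) auto
lemma V0e_cont'[continuous_intros]: "continuous_on S f \<Longrightarrow> continuous_on S (\<lambda>x. V0e (f x))"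
  by (rule continuous_on_compose2[OF V0e_cont]) auto

lemma U0e_bounds: "0 \<le> U0e y \<and> U0e y \<le> Mu"
  unfolding U0e_def using U0_nonneg[OF frac_in] U0_le[OF frac_in] U0_nonneg U0_le Mu_ge by auto
lemma V0e_bounds: "0 \<le> V0e y \<and> V0e y \<le> Mv"
  unfolding V0e_def using V0_nonneg[OF frac_in] V0_le[OF frac_in] V0_nonneg V0_le Mv_ge by auto

definition "F y p q = \<alpha> * max 0 q / (1 + bt y * (max 0 p + max 0 q))"

lemma den_pos[simp]: "1 + bt y * (max 0 p + max 0 q) > 0"
proof -
  have "bt y * (max 0 p + max 0 q) \<ge> 0" by simp
  then show ?thesis by linarith
qed
lemma den_ne[simp]: "1 + bt y * (max 0 p + max 0 q) \<noteq> 0"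
  using den_pos[of y p q] by linarith

lemma F_cont[continuous_intros]: "continuous_on S f \<Longrightarrow> continuous_on S g \<Longrightarrow> continuous_on S h
  \<Longrightarrow> continuous_on S (\<lambda>x. F (f x) (g x) (h x))"
  unfolding F_def by (intro continuous_intros) auto

lemma F_nonneg: "F y p q \<ge> 0"
  unfolding F_def using alpha by (auto intro!: divide_nonneg_pos)

lemma F_le: "F y p q \<le> \<alpha> * cu / C"
proof -
  have b: "C / cu \<le> bt y" using bt_bounds by auto
  have "C / cu > 0" using C_bounds cu_pos by simp
  then have bp: "bt y > 0" using b by linarith
  have D: "1 + bt y * (max 0 p + max 0 q) > 0" by simp
  have "bt y * max 0 p \<ge> 0" using bp by simp
  then have "max 0 q * bt y \<le> 1 + bt y * (max 0 p + max 0 q)" by (simp add: algebra_simps)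
  then have "max 0 q / (1 + bt y * (max 0 p + max 0 q)) \<le> 1 / bt y"
    using bp D by (simp add: field_simps)
  also have "1 / bt y \<le> cu / C" using b bp C_bounds cl cl_cu
    by (simp add: divide_le_eq field_simps) 
  finally have h: "max 0 q / (1 + bt y * (max 0 p + max 0 q)) \<le> cu / C" .
  have "F y p q = \<alpha> * (max 0 q / (1 + bt y * (max 0 p + max 0 q)))" unfolding F_def by simp
  also have "\<dots> \<le> \<alpha> * (cu / C)" using h alpha by (rule mult_left_mono)
  finally show ?thesis by simp
qed

end


lemma lip_R:
  fixes \<alpha> \<beta> a b a' b' \<delta> :: real
  assumes al: "\<alpha> \<ge> 0" and be: "\<beta> \<ge> 0" and a: "a \<ge> 0" and b: "b \<ge> 0" and a': "a' \<ge> -\<delta>" and b': "b' \<ge> -\<delta>"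
    and d: "4 * \<beta> * \<delta> \<le> 1" and d0: "\<delta> \<ge> 0"
  shows "\<bar>\<alpha> * b / (1 + \<beta> * (a + b)) - \<alpha> * b' / (1 + \<beta> * (a' + b'))\<bar> \<le> 4 * \<alpha> * (\<bar>a - a'\<bar> + \<bar>b - b'\<bar>)"
proof -
  define D where "D = 1 + \<beta> * (a + b)"
  define D' where "D' = 1 + \<beta> * (a' + b')"
  have D1: "D \<ge> 1" unfolding D_def using be a b by simp
  have "\<beta> * (a' + b') \<ge> \<beta> * (-2 * \<delta>)" using be a' b' by (intro mult_left_mono) auto
  then have D2: "D' \<ge> 1/2" unfolding D'_def using d by linarith
  have eq: "b / D - b' / D' = b * (D' - D) / (D * D') + (b - b') / D'"
    using D1 D2 by (simp add: field_simps)
  have "D' - D = \<beta> * ((a' - a) + (b' - b))" unfolding D_def D'_def by (simp add: algebra_simps)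
  then have "\<bar>D' - D\<bar> = \<beta> * \<bar>(a' - a) + (b' - b)\<bar>" using be by (simp add: abs_mult)
  also have "\<dots> \<le> \<beta> * (\<bar>a - a'\<bar> + \<bar>b - b'\<bar>)" using be by (intro mult_left_mono) auto
  finally have dD: "\<bar>D' - D\<bar> \<le> \<beta> * (\<bar>a - a'\<bar> + \<bar>b - b'\<bar>)" .
  have bb: "b * \<beta> \<le> D" unfolding D_def using be a b by (simp add: algebra_simps)
  have "\<bar>b * (D' - D)\<bar> \<le> b * (\<beta> * (\<bar>a - a'\<bar> + \<bar>b - b'\<bar>))"
    using dD b by (simp add: abs_mult mult_left_mono)
  also have "\<dots> = (b * \<beta>) * (\<bar>a - a'\<bar> + \<bar>b - b'\<bar>)" by simp
  also have "\<dots> \<le> D * (\<bar>a - a'\<bar> + \<bar>b - b'\<bar>)" using bb by (intro mult_right_mono) auto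
  finally have n1: "\<bar>b * (D' - D)\<bar> \<le> D * (\<bar>a - a'\<bar> + \<bar>b - b'\<bar>)" .
  have DD: "D * D' > 0" using D1 D2 by simp
  define X where "X = \<bar>a - a'\<bar> + \<bar>b - b'\<bar>"
  have X0: "X \<ge> 0" unfolding X_def by simp
  have half: "Y / D' \<le> 2 * Y" if "Y \<ge> 0" for Y
  proof -
    have "Y / D' \<le> Y / (1/2)" using D2 that by (intro divide_left_mono) auto
    then show ?thesis by simp
  qed
  have t1: "\<bar>b * (D' - D) / (D * D')\<bar> \<le> 2 * X"
  proof -
    have "\<bar>b * (D' - D) / (D * D')\<bar> = \<bar>b * (D' - D)\<bar> / (D * D')" using DD by (simp add: abs_divide)
    also have "\<dots> \<le> D * X / (D * D')" using n1 DD unfolding X_def by (intro divide_right_mono) auto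
    also have "\<dots> = X / D'" using D1 by simp
    also have "\<dots> \<le> 2 * X" using half X0 by blast
    finally show ?thesis .
  qed
  have t2: "\<bar>(b - b') / D'\<bar> \<le> 2 * \<bar>b - b'\<bar>"
  proof -
    have "\<bar>(b - b') / D'\<bar> = \<bar>b - b'\<bar> / D'" using D2 by (simp add: abs_divide)
    also have "\<dots> \<le> 2 * \<bar>b - b'\<bar>" using half by simp
    finally show ?thesis .
  qed
  have "\<bar>b / D - b' / D'\<bar> \<le> \<bar>b * (D' - D) / (D * D')\<bar> + \<bar>(b - b') / D'\<bar>"
    unfolding eq by (rule abs_triangle_ineq)
  also have "\<dots> \<le> 2 * X + 2 * \<bar>b - b'\<bar>" by (rule add_mono[OF t1 t2])
  also have "\<dots> \<le> 4 * X" unfolding X_def by simp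
  finally have "\<bar>b / D - b' / D'\<bar> \<le> 4 * X" .
  then have "\<alpha> * \<bar>b / D - b' / D'\<bar> \<le> \<alpha> * (4 * X)" using al by (rule mult_left_mono)
  moreover have "\<bar>\<alpha> * b / D - \<alpha> * b' / D'\<bar> = \<alpha> * \<bar>b / D - b' / D'\<bar>"
  proof -
    have "\<alpha> * b / D - \<alpha> * b' / D' = \<alpha> * (b / D - b' / D')" by (simp add: algebra_simps)
    then show ?thesis using al by (simp add: abs_mult)
  qed
  moreover have "\<alpha> * (4 * X) = 4 * \<alpha> * X" by simp
  ultimately show ?thesis unfolding D_def[symmetric] D'_def[symmetric] X_def[symmetric] by linarith
qed


lemma int_exp_shift: fixes lo \<tau> :: real assumes "lo \<le> \<tau>"
  shows "integral {lo..\<tau>} (\<lambda>s. exp (s - \<tau>)) = 1 - exp (lo - \<tau>)"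
proof -
  have "((\<lambda>s. exp (s - \<tau>)) has_integral (exp (\<tau> - \<tau>) - exp (lo - \<tau>))) {lo..\<tau>}"
    apply (rule fundamental_theorem_of_calculus[OF assms])
    apply (rule has_real_derivative_iff_has_vector_derivative[THEN iffD1])
    by (auto intro!: derivative_eq_intros)
  then show ?thesis by (simp add: integral_unique)
qed

lemma int_exp_lam: fixes lo \<tau> l :: real assumes "lo \<le> \<tau>" "l \<noteq> 0"
  shows "integral {lo..\<tau>} (\<lambda>s. exp (l * s)) = (exp (l * \<tau>) - exp (l * lo)) / l"
proof -
  have "((\<lambda>s. exp (l * s)) has_integral (exp (l * \<tau>) / l - exp (l * lo) / l)) {lo..\<tau>}"
    apply (rule fundamental_theorem_of_calculus[OF assms(1)])
    apply (rule has_real_derivative_iff_has_vector_derivative[THEN iffD1])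
    using assms(2) by (auto intro!: derivative_eq_intros)
  then show ?thesis by (simp add: integral_unique diff_divide_distrib)
qed

lemma cont_comp_pair:
  fixes G :: "'a::topological_space \<Rightarrow> 'b::topological_space \<Rightarrow> 'c::topological_space"
  assumes "continuous_on UNIV (\<lambda>q. G (fst q) (snd q))" "continuous_on S f" "continuous_on S g"
  shows "continuous_on S (\<lambda>x. G (f x) (g x))"
  using continuous_on_compose2[OF assms(1) continuous_on_Pair[OF assms(2,3)]] by simp

definition TI :: "(real \<Rightarrow> real \<Rightarrow> real) \<Rightarrow> real \<Rightarrow> real \<Rightarrow> real \<Rightarrow> real \<Rightarrow> real" where
  "TI G k lo x \<tau> = integral {lo..\<tau>} (\<lambda>s. exp (s - \<tau>) * G (x + k * (s - \<tau>)) s)"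

lemma TI_integrable:
  fixes G :: "real \<Rightarrow> real \<Rightarrow> real" and k lo x \<tau> :: real
  assumes "continuous_on UNIV (\<lambda>q. G (fst q) (snd q))"
  shows "(\<lambda>s. exp (s - \<tau>) * G (x + k * (s - \<tau>)) s) integrable_on {lo..\<tau>}"
proof -
  have h: "continuous_on {lo..\<tau>} (\<lambda>s. G (x + k * (s - \<tau>)) s)"
    by (rule cont_comp_pair[OF assms]) (auto intro!: continuous_intros)
  show ?thesis by (rule integrable_continuous_interval, intro continuous_intros h)
qed

lemma TI_cont:
  fixes lo x \<tau> :: "'a::topological_space \<Rightarrow> real" and G :: "real \<Rightarrow> real \<Rightarrow> real" and k :: real
  assumes G: "continuous_on UNIV (\<lambda>q. G (fst q) (snd q))" and lo: "continuous_on UNIV lo"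
    and x: "continuous_on UNIV x" and \<tau>: "continuous_on UNIV \<tau>" and le: "\<And>p. lo p \<le> \<tau> p"
  shows "continuous_on UNIV (\<lambda>p. TI G k (lo p) (x p) (\<tau> p))"
  unfolding TI_def
proof (rule cont_param_integral[OF lo \<tau> le])
  have xx: "continuous_on UNIV (\<lambda>q. x (fst q))" "continuous_on UNIV (\<lambda>q. \<tau> (fst q))"
    by (auto intro!: continuous_on_compose2[OF x] continuous_on_compose2[OF \<tau>] continuous_intros)
  have "continuous_on UNIV (\<lambda>q. G (x (fst q) + k * (snd q - \<tau> (fst q))) (snd q))"
    by (rule cont_comp_pair[OF G]) (auto intro!: continuous_intros xx)
  then have "continuous_on UNIV (\<lambda>q. exp (snd q - \<tau> (fst q)) * G (x (fst q) + k * (snd q - \<tau> (fst q))) (snd q))"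
    by (auto intro!: continuous_intros xx)
  then show "continuous_on UNIV (\<lambda>(p, s). exp (s - \<tau> p) * G (x p + k * (s - \<tau> p)) s)"
    by (simp add: split_beta)
qed

lemma TI_bounds:
  fixes G :: "real \<Rightarrow> real \<Rightarrow> real" and k lo x \<tau> M :: real
  assumes G: "continuous_on UNIV (\<lambda>q. G (fst q) (snd q))" and Gb: "\<And>y s. 0 \<le> G y s \<and> G y s \<le> M"
    and lo: "0 \<le> lo" "lo \<le> \<tau>"
  shows "0 \<le> TI G k lo x \<tau> \<and> TI G k lo x \<tau> \<le> M * (1 - exp (- \<tau>))"
proof
  show "0 \<le> TI G k lo x \<tau>" unfolding TI_def
    by (rule integral_nonneg[OF TI_integrable[OF G]]) (use Gb in auto)
  have "TI G k lo x \<tau> \<le> integral {lo..\<tau>} (\<lambda>s. M * exp (s - \<tau>))" unfolding TI_def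
    by (rule integral_le[OF TI_integrable[OF G]]) (auto intro!: integrable_continuous_interval continuous_intros simp: Gb mult.commute)
  also have "\<dots> = M * (1 - exp (lo - \<tau>))" using int_exp_shift[OF lo(2)] by simp
  also have "\<dots> \<le> M * (1 - exp (- \<tau>))"
  proof -
    have "M \<ge> 0" using Gb[of 0 0] by linarith
    moreover have "exp (- \<tau>) \<le> exp (lo - \<tau>)" using lo by simp
    ultimately show ?thesis by (intro mult_left_mono) auto
  qed
  finally show "TI G k lo x \<tau> \<le> M * (1 - exp (- \<tau>))" .
qed

lemma TI_diff:
  fixes G1 G2 :: "real \<Rightarrow> real \<Rightarrow> real" and k lo x \<tau> l K :: real
  assumes G1: "continuous_on UNIV (\<lambda>q. G1 (fst q) (snd q))" and G2: "continuous_on UNIV (\<lambda>q. G2 (fst q) (snd q))"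
    and d: "\<And>y s. s \<ge> 0 \<Longrightarrow> \<bar>G1 y s - G2 y s\<bar> \<le> K * exp (l * s)"
    and lo: "0 \<le> lo" "lo \<le> \<tau>" and l: "l > 0"
  shows "\<bar>TI G1 k lo x \<tau> - TI G2 k lo x \<tau>\<bar> \<le> K * exp (l * \<tau>) / l"
proof -
  have "TI G1 k lo x \<tau> - TI G2 k lo x \<tau> = integral {lo..\<tau>} (\<lambda>s. exp (s - \<tau>) * G1 (x + k * (s - \<tau>)) s - exp (s - \<tau>) * G2 (x + k * (s - \<tau>)) s)"
    unfolding TI_def by (rule integral_diff[symmetric]) (intro TI_integrable G1 G2)+
  also have "\<bar>\<dots>\<bar> \<le> integral {lo..\<tau>} (\<lambda>s. K * exp (l * s))"
  proof -
    have "norm (integral {lo..\<tau>} (\<lambda>s. exp (s - \<tau>) * G1 (x + k * (s - \<tau>)) s - exp (s - \<tau>) * G2 (x + k * (s - \<tau>)) s))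
       \<le> integral {lo..\<tau>} (\<lambda>s. K * exp (l * s))"
    proof (rule integral_norm_bound_integral)
      show "(\<lambda>s. exp (s - \<tau>) * G1 (x + k * (s - \<tau>)) s - exp (s - \<tau>) * G2 (x + k * (s - \<tau>)) s) integrable_on {lo..\<tau>}"
        by (intro integrable_diff TI_integrable G1 G2)
      show "(\<lambda>s. K * exp (l * s)) integrable_on {lo..\<tau>}"
        by (auto intro!: integrable_continuous_interval continuous_intros)
      fix s assume s: "s \<in> {lo..\<tau>}"
      have "norm (exp (s - \<tau>) * G1 (x + k * (s - \<tau>)) s - exp (s - \<tau>) * G2 (x + k * (s - \<tau>)) s)
          = exp (s - \<tau>) * \<bar>G1 (x + k * (s - \<tau>)) s - G2 (x + k * (s - \<tau>)) s\<bar>"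
        by (simp add: right_diff_distrib[symmetric] abs_mult)
      also have "\<dots> \<le> 1 * (K * exp (l * s))"
        apply (rule mult_mono)
        using s d[of s "x + k * (s - \<tau>)"] lo by auto
      finally show "norm (exp (s - \<tau>) * G1 (x + k * (s - \<tau>)) s - exp (s - \<tau>) * G2 (x + k * (s - \<tau>)) s) \<le> K * exp (l * s)"
        by simp
    qed
    then show ?thesis by simp
  qed
  also have "\<dots> = K * ((exp (l * \<tau>) - exp (l * lo)) / l)"
    using int_exp_lam[OF lo(2), of l] l by simp
  also have "\<dots> \<le> K * exp (l * \<tau>) / l"
  proof -
    have "\<bar>G1 0 0 - G2 0 0\<bar> \<le> K" using d[of 0 0] by simp
    then have K: "K \<ge> 0" by (meson abs_ge_zero order_trans)
    have "(exp (l * \<tau>) - exp (l * lo)) / l \<le> exp (l * \<tau>) / l"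
      by (rule divide_right_mono) (use l in auto)
    then have "K * ((exp (l * \<tau>) - exp (l * lo)) / l) \<le> K * (exp (l * \<tau>) / l)"
      using K by (rule mult_left_mono)
    then show ?thesis by simp
  qed
  finally show ?thesis .
qed


context prob begin

definition "px (X::real) = (if bc = PBC then X else P01 X)"
definition "lU (x::real) (\<tau>::real) = (if bc = PBC then 0 else max 0 (\<tau> - x / C))"
definition "lV (x::real) (\<tau>::real) = (if bc = PBC then 0 else max 0 (\<tau> - (1 - x) / C))"
definition "GU (W :: real \<times> real \<Rightarrow> real \<times> real) y s = F y (fst (W (y, s))) (snd (W (y, s)))"
definition "GV (W :: real \<times> real \<Rightarrow> real \<times> real) y s = F y (snd (W (y, s))) (fst (W (y, s)))"
definition "tau (p::real \<times> real) = max 0 (snd p)"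
definition "PhiU W p = U0e (px (fst p) - C * tau p) * exp (- tau p) + TI (GU W) C (lU (px (fst p)) (tau p)) (px (fst p)) (tau p)"
definition "PhiV W p = V0e (px (fst p) + C * tau p) * exp (- tau p) + TI (GV W) (-C) (lV (px (fst p)) (tau p)) (px (fst p)) (tau p)"

lemma C_pos: "C > 0" using C_bounds(3) .
lemma C_ne[simp]: "C \<noteq> 0" using C_pos by simp

lemma px_cont: "continuous_on UNIV px"
proof -
  have "px = (if bc = PBC then (\<lambda>X. X) else P01)" by (auto simp: px_def fun_eq_iff)
  then show ?thesis using P01_cont[OF continuous_on_id, of UNIV] by simp
qed
lemma px_range: "bc = DBC \<Longrightarrow> 0 \<le> px X \<and> px X \<le> 1"
  unfolding px_def using P01_range by auto
lemma tau_cont: "continuous_on UNIV tau"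
  unfolding tau_def by (rule continuous_on_max[OF continuous_on_const continuous_on_snd[OF continuous_on_id]])
lemma tau_nonneg: "tau p \<ge> 0" unfolding tau_def by simp

lemma lU_props: "0 \<le> lU (px X) \<tau> \<and> (0 \<le> \<tau> \<longrightarrow> lU (px X) \<tau> \<le> \<tau>)"
  unfolding lU_def
proof (cases bc)
  case DBC
  then have "0 \<le> px X" using px_range by auto
  then have "0 \<le> px X / C" using C_pos by simp
  then show "0 \<le> (if bc = PBC then 0 else max 0 (\<tau> - px X / C)) \<and> (0 \<le> \<tau> \<longrightarrow> (if bc = PBC then 0 else max 0 (\<tau> - px X / C)) \<le> \<tau>)"
    using DBC by auto
qed auto
lemma lV_props: "0 \<le> lV (px X) \<tau> \<and> (0 \<le> \<tau> \<longrightarrow> lV (px X) \<tau> \<le> \<tau>)"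
  unfolding lV_def
proof (cases bc)
  case DBC
  then have "0 \<le> 1 - px X" using px_range by auto
  then have "0 \<le> (1 - px X) / C" using C_pos by simp
  then show "0 \<le> (if bc = PBC then 0 else max 0 (\<tau> - (1 - px X) / C)) \<and> (0 \<le> \<tau> \<longrightarrow> (if bc = PBC then 0 else max 0 (\<tau> - (1 - px X) / C)) \<le> \<tau>)"
    using DBC by auto
qed auto

lemma lU_cont: "continuous_on UNIV (\<lambda>p. lU (px (fst p)) (tau p))"
  unfolding lU_def by (cases "bc = PBC") (auto intro!: continuous_intros continuous_on_compose2[OF px_cont] continuous_on_compose2[OF tau_cont])
lemma lV_cont: "continuous_on UNIV (\<lambda>p. lV (px (fst p)) (tau p))"
  unfolding lV_def by (cases "bc = PBC") (auto intro!: continuous_intros continuous_on_compose2[OF px_cont] continuous_on_compose2[OF tau_cont])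

lemma GU_cont: "continuous_on UNIV W \<Longrightarrow> continuous_on UNIV (\<lambda>q. GU W (fst q) (snd q))"
  unfolding GU_def by (auto intro!: continuous_intros continuous_on_compose2[of UNIV W])
lemma GV_cont: "continuous_on UNIV W \<Longrightarrow> continuous_on UNIV (\<lambda>q. GV W (fst q) (snd q))"
  unfolding GV_def by (auto intro!: continuous_intros continuous_on_compose2[of UNIV W])

lemma px_cont': "continuous_on UNIV (\<lambda>p. px (fst p))"
  by (auto intro!: continuous_on_compose2[OF px_cont] continuous_intros)

lemma PhiU_cont: "continuous_on UNIV W \<Longrightarrow> continuous_on UNIV (PhiU W)"
  unfolding PhiU_def
  by (intro continuous_intros TI_cont GU_cont lU_cont px_cont' tau_cont continuous_on_compose2[OF px_cont] continuous_on_compose2[OF tau_cont])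
     (auto simp: lU_props tau_nonneg)
lemma PhiV_cont: "continuous_on UNIV W \<Longrightarrow> continuous_on UNIV (PhiV W)"
  unfolding PhiV_def
  by (intro continuous_intros TI_cont GV_cont lV_cont px_cont' tau_cont continuous_on_compose2[OF px_cont] continuous_on_compose2[OF tau_cont])
     (auto simp: lV_props tau_nonneg)

lemma PhiU_bounds: assumes W: "continuous_on UNIV W" shows "0 \<le> PhiU W p \<and> PhiU W p \<le> Mu"
proof -
  have Gb: "0 \<le> GU W y s \<and> GU W y s \<le> \<alpha> * cu / C" for y s unfolding GU_def using F_nonneg F_le by auto
  have T: "0 \<le> TI (GU W) C (lU (px (fst p)) (tau p)) (px (fst p)) (tau p) \<and>
      TI (GU W) C (lU (px (fst p)) (tau p)) (px (fst p)) (tau p) \<le> \<alpha> * cu / C * (1 - exp (- tau p))"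
    by (rule TI_bounds[OF GU_cont[OF W] Gb]) (use lU_props[of "fst p" "tau p"] tau_nonneg[of p] in auto)
  have u: "0 \<le> U0e (px (fst p) - C * tau p) \<and> U0e (px (fst p) - C * tau p) \<le> Mu" by (rule U0e_bounds)
  have e: "0 \<le> exp (- tau p)" "exp (- tau p) \<le> 1" using tau_nonneg by auto
  have "U0e (px (fst p) - C * tau p) * exp (- tau p) \<le> Mu * exp (- tau p)"
    using u e by (intro mult_right_mono) auto
  moreover have "\<alpha> * cu / C * (1 - exp (- tau p)) \<le> Mu * (1 - exp (- tau p))"
    using Mu_ge e by (intro mult_right_mono) auto
  moreover have "Mu * exp (- tau p) + Mu * (1 - exp (- tau p)) = Mu" by (simp add: algebra_simps)
  moreover have "PhiU W p = U0e (px (fst p) - C * tau p) * exp (- tau p) + TI (GU W) C (lU (px (fst p)) (tau p)) (px (fst p)) (tau p)"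
    unfolding PhiU_def ..
  ultimately have a1: "PhiU W p \<le> Mu" using T by linarith
  have "0 \<le> U0e (px (fst p) - C * tau p) * exp (- tau p)" using u e by simp
  then have "0 \<le> PhiU W p" unfolding PhiU_def using T by linarith
  then show ?thesis using a1 by simp
qed

lemma PhiV_bounds: assumes W: "continuous_on UNIV W" shows "0 \<le> PhiV W p \<and> PhiV W p \<le> Mv"
proof -
  have Gb: "0 \<le> GV W y s \<and> GV W y s \<le> \<alpha> * cu / C" for y s unfolding GV_def using F_nonneg F_le by auto
  have T: "0 \<le> TI (GV W) (-C) (lV (px (fst p)) (tau p)) (px (fst p)) (tau p) \<and>
      TI (GV W) (-C) (lV (px (fst p)) (tau p)) (px (fst p)) (tau p) \<le> \<alpha> * cu / C * (1 - exp (- tau p))"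
    by (rule TI_bounds[OF GV_cont[OF W] Gb]) (use lV_props[of "fst p" "tau p"] tau_nonneg[of p] in auto)
  have u: "0 \<le> V0e (px (fst p) + C * tau p) \<and> V0e (px (fst p) + C * tau p) \<le> Mv" by (rule V0e_bounds)
  have e: "0 \<le> exp (- tau p)" "exp (- tau p) \<le> 1" using tau_nonneg by auto
  have "V0e (px (fst p) + C * tau p) * exp (- tau p) \<le> Mv * exp (- tau p)"
    using u e by (intro mult_right_mono) auto
  moreover have "\<alpha> * cu / C * (1 - exp (- tau p)) \<le> Mv * (1 - exp (- tau p))"
    using Mv_ge e by (intro mult_right_mono) auto
  moreover have "Mv * exp (- tau p) + Mv * (1 - exp (- tau p)) = Mv" by (simp add: algebra_simps)
  moreover have "PhiV W p = V0e (px (fst p) + C * tau p) * exp (- tau p) + TI (GV W) (-C) (lV (px (fst p)) (tau p)) (px (fst p)) (tau p)"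
    unfolding PhiV_def ..
  ultimately have a1: "PhiV W p \<le> Mv" using T by linarith
  have "0 \<le> V0e (px (fst p) + C * tau p) * exp (- tau p)" using u e by simp
  then have "0 \<le> PhiV W p" unfolding PhiV_def using T by linarith
  then show ?thesis using a1 by simp
qed

lemma F_lip: "\<bar>F y p q - F y p' q'\<bar> \<le> 4 * \<alpha> * (\<bar>p - p'\<bar> + \<bar>q - q'\<bar>)"
proof -
  have "\<bar>F y p q - F y p' q'\<bar> \<le> 4 * \<alpha> * (\<bar>max 0 p - max 0 p'\<bar> + \<bar>max 0 q - max 0 q'\<bar>)"
    unfolding F_def by (rule lip_R[where \<delta>=0]) (use alpha in auto)
  also have "\<dots> \<le> 4 * \<alpha> * (\<bar>p - p'\<bar> + \<bar>q - q'\<bar>)"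
    using alpha by (intro mult_left_mono add_mono) (auto simp: abs_le_iff max_def)
  finally show ?thesis .
qed

lemma PhiU_diff:
  assumes W1: "continuous_on UNIV W1" and W2: "continuous_on UNIV W2" and l: "l > 0"
    and d: "\<And>y s. s \<ge> 0 \<Longrightarrow> \<bar>fst (W1 (y,s)) - fst (W2 (y,s))\<bar> + \<bar>snd (W1 (y,s)) - snd (W2 (y,s))\<bar> \<le> K * exp (l * s)"
  shows "\<bar>PhiU W1 p - PhiU W2 p\<bar> \<le> 4 * \<alpha> * K * exp (l * tau p) / l"
proof -
  have "\<bar>TI (GU W1) C (lU (px (fst p)) (tau p)) (px (fst p)) (tau p) - TI (GU W2) C (lU (px (fst p)) (tau p)) (px (fst p)) (tau p)\<bar>
     \<le> (4 * \<alpha> * K) * exp (l * tau p) / l"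
  proof (rule TI_diff[OF GU_cont[OF W1] GU_cont[OF W2]])
    fix y s :: real assume s: "s \<ge> 0"
    have "\<bar>GU W1 y s - GU W2 y s\<bar> \<le> 4 * \<alpha> * (\<bar>fst (W1 (y,s)) - fst (W2 (y,s))\<bar> + \<bar>snd (W1 (y,s)) - snd (W2 (y,s))\<bar>)"
      unfolding GU_def using F_lip by simp
    also have "\<dots> \<le> 4 * \<alpha> * (K * exp (l * s))" using d[OF s] alpha by (intro mult_left_mono) auto
    finally show "\<bar>GU W1 y s - GU W2 y s\<bar> \<le> 4 * \<alpha> * K * exp (l * s)" by simp
  qed (use lU_props[of "fst p" "tau p"] tau_nonneg[of p] l in auto)
  then show ?thesis unfolding PhiU_def by simp
qed

lemma PhiV_diff:
  assumes W1: "continuous_on UNIV W1" and W2: "continuous_on UNIV W2" and l: "l > 0"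
    and d: "\<And>y s. s \<ge> 0 \<Longrightarrow> \<bar>fst (W1 (y,s)) - fst (W2 (y,s))\<bar> + \<bar>snd (W1 (y,s)) - snd (W2 (y,s))\<bar> \<le> K * exp (l * s)"
  shows "\<bar>PhiV W1 p - PhiV W2 p\<bar> \<le> 4 * \<alpha> * K * exp (l * tau p) / l"
proof -
  have "\<bar>TI (GV W1) (-C) (lV (px (fst p)) (tau p)) (px (fst p)) (tau p) - TI (GV W2) (-C) (lV (px (fst p)) (tau p)) (px (fst p)) (tau p)\<bar>
     \<le> (4 * \<alpha> * K) * exp (l * tau p) / l"
  proof (rule TI_diff[OF GV_cont[OF W1] GV_cont[OF W2]])
    fix y s :: real assume s: "s \<ge> 0"
    have "\<bar>GV W1 y s - GV W2 y s\<bar> \<le> 4 * \<alpha> * (\<bar>snd (W1 (y,s)) - snd (W2 (y,s))\<bar> + \<bar>fst (W1 (y,s)) - fst (W2 (y,s))\<bar>)"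
      unfolding GV_def using F_lip by simp
    also have "\<dots> \<le> 4 * \<alpha> * (K * exp (l * s))" using d[OF s, of y] alpha by (intro mult_left_mono) linarith+
    finally show "\<bar>GV W1 y s - GV W2 y s\<bar> \<le> 4 * \<alpha> * K * exp (l * s)" by simp
  qed (use lV_props[of "fst p" "tau p"] tau_nonneg[of p] l in auto)
  then show ?thesis unfolding PhiV_def by simp
qed

lemma PhiU_per: assumes pb: "bc = PBC" and per: "\<And>y s. W (y + 1, s) = W (y, s)"
  shows "PhiU W (X + 1, t) = PhiU W (X, t)"
proof -
  define \<tau> where "\<tau> = tau (X, t)"
  have t1: "tau (X + 1, t) = \<tau>" unfolding \<tau>_def tau_def by simp
  have g: "GU W (X + 1 + C * (s - \<tau>)) s = GU W (X + C * (s - \<tau>)) s" for s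
  proof -
    have "GU W (X + C * (s - \<tau>) + 1) s = GU W (X + C * (s - \<tau>)) s"
      unfolding GU_def F_def bt_def using pb per by (simp add: frac_1_eq)
    then show ?thesis by (simp add: algebra_simps)
  qed
  have u: "U0e (X + 1 - C * \<tau>) = U0e (X - C * \<tau>)"
    unfolding U0e_def using pb frac_1_eq[of "X - C * \<tau>"] by (simp add: algebra_simps)
  have pp: "px z = z" "lU z r = 0" for z r unfolding px_def lU_def using pb by auto
  show ?thesis unfolding PhiU_def TI_def pp t1 \<tau>_def[symmetric]
    by (simp add: u g)
qed

lemma PhiV_per: assumes pb: "bc = PBC" and per: "\<And>y s. W (y + 1, s) = W (y, s)"
  shows "PhiV W (X + 1, t) = PhiV W (X, t)"
proof -
  define \<tau> where "\<tau> = tau (X, t)"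
  have t1: "tau (X + 1, t) = \<tau>" unfolding \<tau>_def tau_def by simp
  have g: "GV W (X + 1 - C * (s - \<tau>)) s = GV W (X - C * (s - \<tau>)) s" for s
  proof -
    have "GV W (X - C * (s - \<tau>) + 1) s = GV W (X - C * (s - \<tau>)) s"
      unfolding GV_def F_def bt_def using pb per by (simp add: frac_1_eq)
    then show ?thesis by (simp add: algebra_simps)
  qed
  have u: "V0e (X + 1 + C * \<tau>) = V0e (X + C * \<tau>)"
    unfolding V0e_def using pb frac_1_eq[of "X + C * \<tau>"] by (simp add: algebra_simps)
  have pp: "px z = z" "lV z r = 0" for z r unfolding px_def lV_def using pb by auto
  show ?thesis unfolding PhiV_def TI_def pp t1 \<tau>_def[symmetric]
    by (simp add: u g)
qed

end


lemma eval_cont: "continuous_on UNIV (\<lambda>Z::('a::topological_space \<Rightarrow>\<^sub>C 'b::metric_space). apply_bcontfun Z q)"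
  unfolding continuous_on_iff
proof (intro ballI allI impI)
  fix Z :: "'a \<Rightarrow>\<^sub>C 'b" and e :: real assume "e > 0"
  then show "\<exists>d>0. \<forall>Z'\<in>UNIV. dist Z' Z < d \<longrightarrow> dist (apply_bcontfun Z' q) (apply_bcontfun Z q) < e"
    by (intro exI[of _ e]) (auto intro: le_less_trans[OF dist_bounded])
qed

context prob begin

definition "lam = 32 * \<alpha> + 1"
lemma lam_pos: "lam > 0" unfolding lam_def using alpha by simp

definition WZ :: "((real \<times> real) \<Rightarrow>\<^sub>C (real \<times> real)) \<Rightarrow> real \<times> real \<Rightarrow> real \<times> real" where
  "WZ Z = (\<lambda>p. exp (lam * snd p) *\<^sub>R apply_bcontfun Z p)"

definition "Psi_f Z = (\<lambda>p. exp (- lam * tau p) *\<^sub>R (PhiU (WZ Z) p, PhiV (WZ Z) p))"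

lemma WZ_cont: "continuous_on UNIV (WZ Z)"
  unfolding WZ_def by (auto intro!: continuous_intros)

lemma Psi_f_bcontfun: "Psi_f Z \<in> bcontfun"
proof (rule bcontfun_normI)
  show "continuous_on UNIV (Psi_f Z)" unfolding Psi_f_def
    by (intro continuous_intros PhiU_cont PhiV_cont WZ_cont continuous_on_compose2[OF tau_cont]) auto
  fix p
  have e: "0 \<le> exp (- lam * tau p)" "exp (- lam * tau p) \<le> 1" using lam_pos tau_nonneg[of p] by auto
  have "norm (Psi_f Z p) \<le> \<bar>exp (- lam * tau p) * PhiU (WZ Z) p\<bar> + \<bar>exp (- lam * tau p) * PhiV (WZ Z) p\<bar>"
    unfolding Psi_f_def using norm_pair_le by simp
  also have "\<dots> \<le> 1 * Mu + 1 * Mv"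
  proof (intro add_mono)
    show "\<bar>exp (- lam * tau p) * PhiU (WZ Z) p\<bar> \<le> 1 * Mu"
      unfolding abs_mult using PhiU_bounds[OF WZ_cont, of Z p] e by (intro mult_mono) auto
    show "\<bar>exp (- lam * tau p) * PhiV (WZ Z) p\<bar> \<le> 1 * Mv"
      unfolding abs_mult using PhiV_bounds[OF WZ_cont, of Z p] e by (intro mult_mono) auto
  qed
  finally show "norm (Psi_f Z p) \<le> Mu + Mv" by simp
qed

definition "Psi Z = Bcontfun (Psi_f Z)"

lemma Psi_apply: "apply_bcontfun (Psi Z) = Psi_f Z"
  unfolding Psi_def using Psi_f_bcontfun by (simp add: Bcontfun_inverse)

lemma Psi_contr: "dist (Psi Z1) (Psi Z2) \<le> 1/2 * dist Z1 Z2"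
proof (rule dist_bound)
  fix p
  define d where "d = dist Z1 Z2"
  have dW: "\<bar>fst (WZ Z1 (y,s)) - fst (WZ Z2 (y,s))\<bar> + \<bar>snd (WZ Z1 (y,s)) - snd (WZ Z2 (y,s))\<bar> \<le> (2 * d) * exp (lam * s)" for y s
  proof -
    have n: "norm (apply_bcontfun Z1 (y,s) - apply_bcontfun Z2 (y,s)) \<le> d"
      unfolding d_def using dist_bounded[of Z1 "(y,s)" Z2] by (simp add: dist_norm)
    define z where "z = apply_bcontfun Z1 (y,s) - apply_bcontfun Z2 (y,s)"
    have "\<bar>fst z\<bar> \<le> norm z" using norm_fst_le[of "fst z" "snd z"] by simp
    moreover have "\<bar>snd z\<bar> \<le> norm z" using norm_snd_le[of "snd z" "fst z"] by simp
    moreover have "fst z = fst (apply_bcontfun Z1 (y,s)) - fst (apply_bcontfun Z2 (y,s))"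
      "snd z = snd (apply_bcontfun Z1 (y,s)) - snd (apply_bcontfun Z2 (y,s))" by (simp_all add: z_def)
    moreover note n[folded z_def]
    ultimately have "\<bar>fst (apply_bcontfun Z1 (y,s)) - fst (apply_bcontfun Z2 (y,s))\<bar> + \<bar>snd (apply_bcontfun Z1 (y,s)) - snd (apply_bcontfun Z2 (y,s))\<bar> \<le> 2 * d"
      by linarith
    then have "exp (lam * s) * (\<bar>fst (apply_bcontfun Z1 (y,s)) - fst (apply_bcontfun Z2 (y,s))\<bar> + \<bar>snd (apply_bcontfun Z1 (y,s)) - snd (apply_bcontfun Z2 (y,s))\<bar>) \<le> exp (lam * s) * (2 * d)"
      by (intro mult_left_mono) auto
    moreover have "fst (WZ Z1 (y,s)) - fst (WZ Z2 (y,s)) = exp (lam * s) * (fst (apply_bcontfun Z1 (y,s)) - fst (apply_bcontfun Z2 (y,s)))"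
      "snd (WZ Z1 (y,s)) - snd (WZ Z2 (y,s)) = exp (lam * s) * (snd (apply_bcontfun Z1 (y,s)) - snd (apply_bcontfun Z2 (y,s)))"
      unfolding WZ_def by (simp_all add: right_diff_distrib)
    ultimately show ?thesis by (simp add: abs_mult distrib_left mult.commute)
  qed
  have e: "exp (- lam * tau p) * exp (lam * tau p) = 1" by (simp add: exp_add[symmetric])
  have b1: "\<bar>exp (- lam * tau p) * (PhiU (WZ Z1) p - PhiU (WZ Z2) p)\<bar> \<le> 8 * \<alpha> * d / lam"
  proof -
    have "\<bar>exp (- lam * tau p) * (PhiU (WZ Z1) p - PhiU (WZ Z2) p)\<bar> \<le> exp (- lam * tau p) * (4 * \<alpha> * (2 * d) * exp (lam * tau p) / lam)"
      unfolding abs_mult abs_exp_cancel using PhiU_diff[OF WZ_cont WZ_cont lam_pos dW] by (intro mult_left_mono) auto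
    also have "\<dots> = 8 * \<alpha> * d / lam" using e by (simp add: field_simps)
    finally show ?thesis .
  qed
  have b2: "\<bar>exp (- lam * tau p) * (PhiV (WZ Z1) p - PhiV (WZ Z2) p)\<bar> \<le> 8 * \<alpha> * d / lam"
  proof -
    have "\<bar>exp (- lam * tau p) * (PhiV (WZ Z1) p - PhiV (WZ Z2) p)\<bar> \<le> exp (- lam * tau p) * (4 * \<alpha> * (2 * d) * exp (lam * tau p) / lam)"
      unfolding abs_mult abs_exp_cancel using PhiV_diff[OF WZ_cont WZ_cont lam_pos dW] by (intro mult_left_mono) auto
    also have "\<dots> = 8 * \<alpha> * d / lam" using e by (simp add: field_simps)
    finally show ?thesis .
  qed
  have "dist (Psi Z1 p) (Psi Z2 p) = norm (exp (- lam * tau p) * (PhiU (WZ Z1) p - PhiU (WZ Z2) p), exp (- lam * tau p) * (PhiV (WZ Z1) p - PhiV (WZ Z2) p))"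
    unfolding Psi_apply Psi_f_def dist_norm by (simp add: algebra_simps)
  also have "\<dots> \<le> 8 * \<alpha> * d / lam + 8 * \<alpha> * d / lam"
    using norm_pair_le b1 b2 by (smt (verit))
  also have "\<dots> \<le> 1/2 * d"
  proof -
    have d0: "d \<ge> 0" unfolding d_def by simp
    have "16 * \<alpha> * d \<le> lam / 2 * d" unfolding lam_def using d0 alpha by (intro mult_right_mono) auto
    then show ?thesis using lam_pos by (simp add: field_simps)
  qed
  finally show "dist (Psi Z1 p) (Psi Z2 p) \<le> 1/2 * dist Z1 Z2" unfolding d_def .
qed

definition "Sp = {Z :: (real \<times> real) \<Rightarrow>\<^sub>C (real \<times> real). bc = PBC \<longrightarrow> (\<forall>X t. apply_bcontfun Z (X + 1, t) = apply_bcontfun Z (X, t))}"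

lemma Sp_closed: "closed Sp"
proof (cases "bc = PBC")
  case True
  have "Sp = (\<Inter>q. {Z. apply_bcontfun Z (fst q + 1, snd q) = apply_bcontfun Z q})"
    unfolding Sp_def using True by auto
  also have "closed \<dots>"
    by (intro closed_INT ballI closed_Collect_eq[OF eval_cont eval_cont])
  finally show ?thesis .
qed (auto simp: Sp_def)

lemma Sp_ne: "0 \<in> Sp" unfolding Sp_def by (simp add: zero_bcontfun.rep_eq)

lemma WZ_per: "Z \<in> Sp \<Longrightarrow> bc = PBC \<Longrightarrow> WZ Z (y + 1, s) = WZ Z (y, s)"
  unfolding Sp_def WZ_def by simp

lemma Psi_Sp: assumes Z: "Z \<in> Sp" shows "Psi Z \<in> Sp"
proof -
  have "Psi_f Z (X + 1, t) = Psi_f Z (X, t)" if pb: "bc = PBC" for X t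
  proof -
    have per: "\<And>y s. WZ Z (y + 1, s) = WZ Z (y, s)" using WZ_per[OF Z pb] .
    show ?thesis unfolding Psi_f_def using PhiU_per[OF pb per] PhiV_per[OF pb per] by (simp add: tau_def)
  qed
  then show ?thesis unfolding Sp_def mem_Collect_eq Psi_apply by simp
qed

lemma fix_exists: "\<exists>Z\<in>Sp. Psi Z = Z"
proof -
  have "\<exists>!Z\<in>Sp. Psi Z = Z"
    by (rule Banach_fix[where c="1/2", OF complete_closed_subset[OF Sp_closed subset_UNIV complete_UNIV]])
       (use Sp_ne Psi_Sp Psi_contr in auto)
  then show ?thesis by blast
qed

definition "Zs = (SOME Z. Z \<in> Sp \<and> Psi Z = Z)"
lemma Zs: "Zs \<in> Sp" "Psi Zs = Zs"
  using someI_ex[of "\<lambda>Z. Z \<in> Sp \<and> Psi Z = Z"] fix_exists unfolding Zs_def by auto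

definition "Ws = WZ Zs"

lemma Ws_cont: "continuous_on UNIV Ws" unfolding Ws_def by (rule WZ_cont)

lemma Ws_fix: assumes "t \<ge> 0" shows "Ws (X, t) = (PhiU Ws (X, t), PhiV Ws (X, t))"
proof -
  have "apply_bcontfun Zs (X,t) = Psi_f Zs (X,t)" using Zs(2) Psi_apply by metis
  then have "Ws (X,t) = exp (lam * t) *\<^sub>R (exp (- lam * t) *\<^sub>R (PhiU Ws (X,t), PhiV Ws (X,t)))"
    unfolding Ws_def WZ_def Psi_f_def tau_def using assms by simp
  also have "\<dots> = (PhiU Ws (X,t), PhiV Ws (X,t))" by (simp add: exp_add[symmetric])
  finally show ?thesis .
qed

lemma Ws_per: "bc = PBC \<Longrightarrow> Ws (y + 1, s) = Ws (y, s)"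
  unfolding Ws_def using WZ_per[OF Zs(1)] by simp

lemma Ws_bounds: assumes "t \<ge> 0"
  shows "0 \<le> fst (Ws (X,t)) \<and> fst (Ws (X,t)) \<le> Mu \<and> 0 \<le> snd (Ws (X,t)) \<and> snd (Ws (X,t)) \<le> Mv"
  using Ws_fix[OF assms, of X] PhiU_bounds[OF Ws_cont, of "(X,t)"] PhiV_bounds[OF Ws_cont, of "(X,t)"] by simp

end


context prob begin

definition "Us X t = fst (Ws (X, t))"
definition "Vs X t = snd (Ws (X, t))"

lemma Ws_per_nat: assumes pb: "bc = PBC" shows "Ws (y + real n, s) = Ws (y, s)"
proof (induction n)
  case (Suc n)
  have "Ws (y + real (Suc n), s) = Ws ((y + real n) + 1, s)" by (simp add: algebra_simps)
  also have "\<dots> = Ws (y + real n, s)" by (rule Ws_per[OF pb])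
  finally show ?case using Suc by simp
qed simp

lemma Ws_per_int: assumes "bc = PBC" shows "Ws (y + of_int n, s) = Ws (y, s)"
proof (cases "n \<ge> 0")
  case True
  then show ?thesis using Ws_per_nat[OF assms, of y "nat n"] by simp
next
  case False
  then have "Ws (y + of_int n + real (nat (- n)), s) = Ws (y + of_int n, s)"
    using Ws_per_nat[OF assms] by blast
  moreover have "y + of_int n + real (nat (- n)) = y" using False by simp
  ultimately show ?thesis by simp
qed

lemma Ws_frac: "bc = PBC \<Longrightarrow> Ws (frac y, s) = Ws (y, s)"
  unfolding frac_def using Ws_per_int[of y "- \<lfloor>y\<rfloor>" s] by simp

lemma GU_Rf: assumes s: "s \<ge> 0" and y: "bc = PBC \<or> y \<in> {0..1}"
  shows "GU Ws y s = Rf \<alpha> c Us Vs (if bc = PBC then frac y else y) s"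
proof -
  have b: "bt y = beta c (if bc = PBC then frac y else y)"
    unfolding bt_def using y P01_id by auto
  have w: "Ws (if bc = PBC then frac y else y, s) = Ws (y, s)" using Ws_frac by auto
  show ?thesis unfolding GU_def F_def Rf_def Us_def Vs_def b w using Ws_bounds[OF s, of y] by simp
qed

lemma GV_Rf: assumes s: "s \<ge> 0" and y: "bc = PBC \<or> y \<in> {0..1}"
  shows "GV Ws y s = Rf \<alpha> c Vs Us (if bc = PBC then frac y else y) s"
proof -
  have b: "bt y = beta c (if bc = PBC then frac y else y)"
    unfolding bt_def using y P01_id by auto
  have w: "Ws (if bc = PBC then frac y else y, s) = Ws (y, s)" using Ws_frac by auto
  show ?thesis unfolding GV_def F_def Rf_def Us_def Vs_def b w using Ws_bounds[OF s, of y] by (simp add: add.commute)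
qed

lemma Us_eq: assumes X: "X \<in> {0..1}" and t: "t \<ge> 0"
  shows "Us X t = (if bc = PBC then U0 (frac (X - C * t)) else (if X - C * t \<ge> 0 then U0 (X - C * t) else 0)) * exp (- t)
     + integral {lU X t..t} (\<lambda>s. exp (s - t) * Rf \<alpha> c Us Vs (if bc = PBC then frac (X + C * (s - t)) else X + C * (s - t)) s)"
proof -
  have pxX: "px X = X" unfolding px_def using P01_id[OF X] by simp
  have ta: "tau (X, t) = t" unfolding tau_def using t by simp
  have u: "U0e (X - C * t) = (if bc = PBC then U0 (frac (X - C * t)) else (if X - C * t \<ge> 0 then U0 (X - C * t) else 0))"
  proof -
    have "C * t \<ge> 0" using t C_pos by simp
    then show ?thesis unfolding U0e_def using X by auto
  qed
  have i: "integral {lU X t..t} (\<lambda>s. exp (s - t) * GU Ws (X + C * (s - t)) s)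
     = integral {lU X t..t} (\<lambda>s. exp (s - t) * Rf \<alpha> c Us Vs (if bc = PBC then frac (X + C * (s - t)) else X + C * (s - t)) s)"
  proof (rule integral_cong)
    fix s assume s: "s \<in> {lU X t..t}"
    have s0: "s \<ge> 0" using s lU_props[of X t] pxX by auto
    have "bc = PBC \<or> X + C * (s - t) \<in> {0..1}"
    proof (cases bc)
      case DBC
      then have "t - X / C \<le> s" "s \<le> t" using s unfolding lU_def by auto
      then have "C * (t - X / C) \<le> C * s" "C * s \<le> C * t" using C_pos by (auto intro: mult_left_mono)
      moreover have "C * (t - X / C) = C * t - X" using C_pos by (simp add: field_simps)
      ultimately have "X + C * (s - t) \<in> {0..1}" using X by (auto simp: algebra_simps)
      then show ?thesis by simp
    qed simp
    then show "exp (s - t) * GU Ws (X + C * (s - t)) s = exp (s - t) * Rf \<alpha> c Us Vs (if bc = PBC then frac (X + C * (s - t)) else X + C * (s - t)) s"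
      using GU_Rf[OF s0] by simp
  qed
  have "Us X t = PhiU Ws (X,t)" using Ws_fix[OF t, of X] by (simp add: Us_def)
  also have "\<dots> = U0e (X - C * t) * exp (- t) + integral {lU X t..t} (\<lambda>s. exp (s - t) * GU Ws (X + C * (s - t)) s)"
    unfolding PhiU_def TI_def ta by (simp add: pxX)
  finally show ?thesis unfolding u i .
qed

lemma Vs_eq: assumes X: "X \<in> {0..1}" and t: "t \<ge> 0"
  shows "Vs X t = (if bc = PBC then V0 (frac (X + C * t)) else (if 1 - X - C * t \<ge> 0 then V0 (X + C * t) else 0)) * exp (- t)
     + integral {lV X t..t} (\<lambda>s. exp (s - t) * Rf \<alpha> c Vs Us (if bc = PBC then frac (X - C * (s - t)) else X - C * (s - t)) s)"
proof -
  have pxX: "px X = X" unfolding px_def using P01_id[OF X] by simp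
  have ta: "tau (X, t) = t" unfolding tau_def using t by simp
  have u: "V0e (X + C * t) = (if bc = PBC then V0 (frac (X + C * t)) else (if 1 - X - C * t \<ge> 0 then V0 (X + C * t) else 0))"
  proof -
    have "C * t \<ge> 0" using t C_pos by simp
    then show ?thesis unfolding V0e_def using X by auto
  qed
  have i: "integral {lV X t..t} (\<lambda>s. exp (s - t) * GV Ws (X + - C * (s - t)) s)
     = integral {lV X t..t} (\<lambda>s. exp (s - t) * Rf \<alpha> c Vs Us (if bc = PBC then frac (X - C * (s - t)) else X - C * (s - t)) s)"
  proof (rule integral_cong)
    fix s assume s: "s \<in> {lV X t..t}"
    have s0: "s \<ge> 0" using s lV_props[of X t] pxX by auto
    have "bc = PBC \<or> X - C * (s - t) \<in> {0..1}"
    proof (cases bc)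
      case DBC
      then have "t - (1 - X) / C \<le> s" "s \<le> t" using s unfolding lV_def by auto
      then have "C * (t - (1 - X) / C) \<le> C * s" "C * s \<le> C * t" using C_pos by (auto intro: mult_left_mono)
      moreover have "C * (t - (1 - X) / C) = C * t - (1 - X)" using C_pos by (simp add: field_simps)
      ultimately have "X - C * (s - t) \<in> {0..1}" using X by (auto simp: algebra_simps)
      then show ?thesis by simp
    qed simp
    then show "exp (s - t) * GV Ws (X + - C * (s - t)) s = exp (s - t) * Rf \<alpha> c Vs Us (if bc = PBC then frac (X - C * (s - t)) else X - C * (s - t)) s"
      using GV_Rf[OF s0] by simp
  qed
  have "Vs X t = PhiV Ws (X,t)" using Ws_fix[OF t, of X] by (simp add: Vs_def)
  also have "\<dots> = V0e (X + C * t) * exp (- t) + integral {lV X t..t} (\<lambda>s. exp (s - t) * GV Ws (X + - C * (s - t)) s)"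
    unfolding PhiV_def TI_def ta by (simp add: pxX)
  finally show ?thesis unfolding u i .
qed

lemma sol_mild: "mild_sol bc \<alpha> c u0 v0 Us Vs"
proof -
  have cU: "continuous_on ({0..1} \<times> {0..}) (\<lambda>(X, t). Us X t)"
    unfolding Us_def using Ws_cont by (auto intro!: continuous_intros intro: continuous_on_subset simp: split_beta)
  have cV: "continuous_on ({0..1} \<times> {0..}) (\<lambda>(X, t). Vs X t)"
    unfolding Vs_def using Ws_cont by (auto intro!: continuous_intros intro: continuous_on_subset simp: split_beta)
  show ?thesis
  proof (cases bc)
    case PBC
    have l0: "lU X t = 0" "lV X t = 0" for X t unfolding lU_def lV_def using PBC by auto
    have per: "Us 0 t = Us 1 t \<and> Vs 0 t = Vs 1 t" for t
      unfolding Us_def Vs_def using Ws_per[OF PBC, of 0 t] by simp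
    show ?thesis unfolding mild_sol_def Let_def C_def[symmetric] U0_def[symmetric] V0_def[symmetric]
      using cU cV per Us_eq[unfolded l0] Vs_eq[unfolded l0] PBC by simp
  next
    case DBC
    have l0: "lU X t = max 0 (t - X / C)" "lV X t = max 0 (t - (1 - X) / C)" for X t unfolding lU_def lV_def using DBC by auto
    show ?thesis unfolding mild_sol_def Let_def C_def[symmetric] U0_def[symmetric] V0_def[symmetric]
      using cU cV Us_eq[unfolded l0] Vs_eq[unfolded l0] DBC by simp
  qed
qed

end


lemma int_split_bound:
  fixes g :: "real \<Rightarrow> real"
  assumes g: "g integrable_on {l..t}" and lt: "l \<le> t" and Tt: "T \<le> t" and M: "M \<ge> 0"
    and z: "\<And>s. s \<in> {l..t} \<Longrightarrow> s \<le> T \<Longrightarrow> g s = 0"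
    and b: "\<And>s. s \<in> {l..t} \<Longrightarrow> T \<le> s \<Longrightarrow> \<bar>g s\<bar> \<le> M"
  shows "\<bar>integral {l..t} g\<bar> \<le> M * (t - T)"
proof (cases "T \<le> l")
  case True
  have "norm (integral {l..t} g) \<le> integral {l..t} (\<lambda>_. M)"
    by (rule integral_norm_bound_integral[OF g]) (use b True in auto)
  also have "\<dots> = M * (t - l)" using lt by simp
  also have "\<dots> \<le> M * (t - T)" using True M by (intro mult_left_mono) auto
  finally show ?thesis by simp
next
  case False
  have gT: "g integrable_on {T..t}" by (rule integrable_subinterval_real[OF g]) (use False in auto)
  have gl: "g integrable_on {l..T}" by (rule integrable_subinterval_real[OF g]) (use False Tt in auto)
  have "integral {l..T} g + integral {T..t} g = integral {l..t} g"
    by (rule Henstock_Kurzweil_Integration.integral_combine[OF _ Tt g]) (use False in auto)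
  moreover have "integral {l..T} g = integral {l..T} (\<lambda>_. 0)"
    by (rule integral_cong) (use z Tt in auto)
  moreover have "norm (integral {T..t} g) \<le> integral {T..t} (\<lambda>_. M)"
    by (rule integral_norm_bound_integral[OF gT]) (use b False in auto)
  moreover have "integral {T..t} (\<lambda>_. M) = M * (t - T)" using Tt by simp
  ultimately show ?thesis using Tt by (simp add: mult.commute)
qed

context prob begin

definition "AU X t = (if bc = PBC then U0 (frac (X - C * t)) else (if X - C * t \<ge> 0 then U0 (X - C * t) else 0)) * exp (- t)"
definition "AV X t = (if bc = PBC then V0 (frac (X + C * t)) else (if 1 - X - C * t \<ge> 0 then V0 (X + C * t) else 0)) * exp (- t)"
definition "aU X t s = (if bc = PBC then frac (X + C * (s - t)) else X + C * (s - t))"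
definition "aV X t s = (if bc = PBC then frac (X - C * (s - t)) else X - C * (s - t))"

lemma mild_eqs:
  assumes sol: "mild_sol bc \<alpha> c u0 v0 U V" and X: "X \<in> {0..1}" and t: "t \<ge> 0"
  shows "U X t = AU X t + integral {lU X t..t} (\<lambda>s. exp (s - t) * Rf \<alpha> c U V (aU X t s) s)"
    and "V X t = AV X t + integral {lV X t..t} (\<lambda>s. exp (s - t) * Rf \<alpha> c V U (aV X t s) s)"
proof -
  have m: "mild_sol bc \<alpha> c u0 v0 U V" by fact
  note m' = m[unfolded mild_sol_def Let_def C_def[symmetric] U0_def[symmetric] V0_def[symmetric]]
  have "U X t = AU X t + integral {lU X t..t} (\<lambda>s. exp (s - t) * Rf \<alpha> c U V (aU X t s) s) \<and>
        V X t = AV X t + integral {lV X t..t} (\<lambda>s. exp (s - t) * Rf \<alpha> c V U (aV X t s) s)"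
  proof (cases bc)
    case PBC
    then show ?thesis using m' X t unfolding AU_def AV_def aU_def aV_def lU_def lV_def by auto
  next
    case DBC
    then show ?thesis using m' X t unfolding AU_def AV_def aU_def aV_def lU_def lV_def by auto
  qed
  then show "U X t = AU X t + integral {lU X t..t} (\<lambda>s. exp (s - t) * Rf \<alpha> c U V (aU X t s) s)"
    and "V X t = AV X t + integral {lV X t..t} (\<lambda>s. exp (s - t) * Rf \<alpha> c V U (aV X t s) s)" by auto
qed

lemma mild_cont:
  assumes sol: "mild_sol bc \<alpha> c u0 v0 U V"
  shows "continuous_on ({0..1} \<times> {0..}) (\<lambda>(X, t). U X t)" "continuous_on ({0..1} \<times> {0..}) (\<lambda>(X, t). V X t)"
    "bc = PBC \<Longrightarrow> t \<ge> 0 \<Longrightarrow> U 0 t = U 1 t \<and> V 0 t = V 1 t"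
proof -
  note m' = sol[unfolded mild_sol_def Let_def]
  show "continuous_on ({0..1} \<times> {0..}) (\<lambda>(X, t). U X t)" "continuous_on ({0..1} \<times> {0..}) (\<lambda>(X, t). V X t)"
    using m' by auto
  show "bc = PBC \<Longrightarrow> t \<ge> 0 \<Longrightarrow> U 0 t = U 1 t \<and> V 0 t = V 1 t"
    using m' by auto
qed

lemma lU_le: "X \<in> {0..1} \<Longrightarrow> t \<ge> 0 \<Longrightarrow> 0 \<le> lU X t \<and> lU X t \<le> t"
  using lU_props[of X t] unfolding px_def P01_def by (auto simp: lU_def)
lemma lV_le: "X \<in> {0..1} \<Longrightarrow> t \<ge> 0 \<Longrightarrow> 0 \<le> lV X t \<and> lV X t \<le> t"
  using lV_props[of X t] unfolding px_def P01_def by (auto simp: lV_def)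

lemma aU_range: assumes X: "X \<in> {0..1}" and s: "s \<in> {lU X t..t}" shows "aU X t s \<in> {0..1}"
proof (cases bc)
  case PBC
  then show ?thesis unfolding aU_def using frac_in by simp
next
  case DBC
  then have "t - X / C \<le> s" "s \<le> t" using s unfolding lU_def by auto
  then have "C * (t - X / C) \<le> C * s" "C * s \<le> C * t" using C_pos by (auto intro: mult_left_mono)
  moreover have "C * (t - X / C) = C * t - X" using C_pos by (simp add: field_simps)
  ultimately have "X + C * (s - t) \<in> {0..1}" using X by (auto simp: algebra_simps)
  then show ?thesis unfolding aU_def using DBC by simp
qed

lemma aV_range: assumes X: "X \<in> {0..1}" and s: "s \<in> {lV X t..t}" shows "aV X t s \<in> {0..1}"
proof (cases bc)
  case PBC
  then show ?thesis unfolding aV_def using frac_in by simp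
next
  case DBC
  then have "t - (1 - X) / C \<le> s" "s \<le> t" using s unfolding lV_def by auto
  then have "C * (t - (1 - X) / C) \<le> C * s" "C * s \<le> C * t" using C_pos by (auto intro: mult_left_mono)
  moreover have "C * (t - (1 - X) / C) = C * t - (1 - X)" using C_pos by (simp add: field_simps)
  ultimately have "X - C * (s - t) \<in> {0..1}" using X by (auto simp: algebra_simps)
  then show ?thesis unfolding aV_def using DBC by simp
qed

lemma adm_cont:
  fixes f :: "real \<Rightarrow> real \<Rightarrow> real"
  assumes f: "continuous_on ({0..1} \<times> {0..}) (\<lambda>(y,s). f y s)" and per: "bc = PBC \<Longrightarrow> \<forall>s\<in>{0..}. f 0 s = f 1 s"
    and X: "X \<in> {0..1}" and t: "t \<ge> 0"
  shows "continuous_on {lU X t..t} (\<lambda>s. f (aU X t s) s)" "continuous_on {lV X t..t} (\<lambda>s. f (aV X t s) s)"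
proof -
  have "continuous_on {lU X t..t} (\<lambda>s. f (aU X t s) s) \<and> continuous_on {lV X t..t} (\<lambda>s. f (aV X t s) s)"
  proof (cases bc)
    case PBC
    have g: "continuous_on ((UNIV::real set) \<times> {0..}) (\<lambda>(y,s). f (frac y) s)"
      by (rule cont_frac2[OF f per[OF PBC]]) auto
    have l0: "lU X t = 0" "lV X t = 0" unfolding lU_def lV_def using PBC by auto
    have a: "aU X t s = frac (X + C * (s - t))" "aV X t s = frac (X - C * (s - t))" for s
      unfolding aU_def aV_def using PBC by auto
    have "continuous_on {0..t} (\<lambda>s. (\<lambda>(y,s). f (frac y) s) (X + C * (s - t), s))"
      by (rule continuous_on_compose2[OF g]) (auto intro!: continuous_intros)
    moreover have "continuous_on {0..t} (\<lambda>s. (\<lambda>(y,s). f (frac y) s) (X - C * (s - t), s))"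
      by (rule continuous_on_compose2[OF g]) (auto intro!: continuous_intros)
    ultimately show ?thesis unfolding l0 a by simp
  next
    case DBC
    have a: "aU X t s = X + C * (s - t)" "aV X t s = X - C * (s - t)" for s
      unfolding aU_def aV_def using DBC by auto
    have rU: "X + C * (x - t) \<in> {0..1}" if "x \<in> {lU X t..t}" for x using aU_range[OF X that] unfolding a .
    have rV: "X - C * (x - t) \<in> {0..1}" if "x \<in> {lV X t..t}" for x using aV_range[OF X that] unfolding a .
    have "continuous_on {lU X t..t} (\<lambda>s. (\<lambda>(y,s). f y s) (X + C * (s - t), s))"
      apply (rule continuous_on_compose2[OF f])
       apply (auto intro!: continuous_intros)
      using rU lU_le[OF X t] by fastforce+
    moreover have "continuous_on {lV X t..t} (\<lambda>s. (\<lambda>(y,s). f y s) (X - C * (s - t), s))"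
      apply (rule continuous_on_compose2[OF f])
       apply (auto intro!: continuous_intros)
      using rV lV_le[OF X t] by fastforce+
    ultimately show ?thesis unfolding a by simp
  qed
  then show "continuous_on {lU X t..t} (\<lambda>s. f (aU X t s) s)" "continuous_on {lV X t..t} (\<lambda>s. f (aV X t s) s)" by auto
qed

lemma beta_adm: "continuous_on ({0..1} \<times> {0..}) (\<lambda>(y,s::real). beta c y)" "bc = PBC \<Longrightarrow> \<forall>s\<in>{(0::real)..}. beta c 0 = beta c 1"
proof -
  show "continuous_on ({0..1} \<times> {0..}) (\<lambda>(y,s::real). beta c y)"
  proof -
    have "continuous_on ({0..1} \<times> {0..}) (\<lambda>x::real\<times>real. beta c (fst x))"
      by (rule continuous_on_compose2[OF beta_cont]) (auto intro!: continuous_intros)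
    then show ?thesis by (simp add: split_beta)
  qed
  show "bc = PBC \<Longrightarrow> \<forall>s\<in>{(0::real)..}. beta c 0 = beta c 1" using PBC_facts by auto
qed

end


context prob begin

definition "d0 = cl / (4 * C)"

lemma d0_pos: "d0 > 0" unfolding d0_def using cl C_pos by simp

lemma beta_d0: "y \<in> {0..1} \<Longrightarrow> 4 * beta c y * d0 \<le> 1"
proof -
  assume y: "y \<in> {0..1}"
  have "beta c y \<le> C / cl" using beta_bounds[OF y] by simp
  then have "4 * beta c y * d0 \<le> 4 * (C / cl) * d0" using d0_pos by (intro mult_right_mono) auto
  also have "\<dots> = 1" unfolding d0_def using cl C_pos by simp
  finally show ?thesis .
qed

lemma den_half: assumes y: "y \<in> {0..1}" and p: "p \<ge> - d0" and q: "q \<ge> - d0"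
  shows "1 + beta c y * (p + q) \<ge> 1/2"
proof -
  have b0: "beta c y \<ge> 0" using beta_pos[OF y] by simp
  have "beta c y * (p + q) \<ge> beta c y * (- 2 * d0)" using p q b0 by (intro mult_left_mono) auto
  moreover have "4 * beta c y * d0 \<le> 1" by (rule beta_d0[OF y])
  ultimately show ?thesis by linarith
qed

lemma Rf_cont:
  fixes P Q :: "real \<Rightarrow> real \<Rightarrow> real" and a :: "real \<Rightarrow> real"
  assumes cP: "continuous_on S (\<lambda>s. P (a s) s)" and cQ: "continuous_on S (\<lambda>s. Q (a s) s)"
    and cB: "continuous_on S (\<lambda>s. beta c (a s))"
    and den: "\<And>s. s \<in> S \<Longrightarrow> 1 + beta c (a s) * (P (a s) s + Q (a s) s) \<noteq> 0"
  shows "continuous_on S (\<lambda>s. exp (s - t) * Rf \<alpha> c P Q (a s) s)"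
  unfolding Rf_def by (intro continuous_intros cP cQ cB) (use den in auto)

lemma comp_bound:
  fixes P Q P' Q' :: "real \<Rightarrow> real \<Rightarrow> real" and a :: "real \<Rightarrow> real"
  assumes ar: "\<And>s. s \<in> {l..t} \<Longrightarrow> a s \<in> {0..1}"
    and lt: "0 \<le> l" "l \<le> t" "T \<le> t" "t \<le> T + \<epsilon>"
    and cP: "continuous_on {l..t} (\<lambda>s. P (a s) s)" and cQ: "continuous_on {l..t} (\<lambda>s. Q (a s) s)"
    and cP': "continuous_on {l..t} (\<lambda>s. P' (a s) s)" and cQ': "continuous_on {l..t} (\<lambda>s. Q' (a s) s)"
    and cB: "continuous_on {l..t} (\<lambda>s. beta c (a s))"
    and nn: "\<And>y s. y \<in> {0..1} \<Longrightarrow> s \<ge> 0 \<Longrightarrow> P y s \<ge> 0 \<and> Q y s \<ge> 0"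
    and ng: "\<And>y s. y \<in> {0..1} \<Longrightarrow> s \<in> {0..T + \<epsilon>} \<Longrightarrow> P' y s \<ge> - d0 \<and> Q' y s \<ge> - d0"
    and eq: "\<And>y s. y \<in> {0..1} \<Longrightarrow> s \<in> {0..T} \<Longrightarrow> P' y s = P y s \<and> Q' y s = Q y s"
    and dd: "\<And>y s. y \<in> {0..1} \<Longrightarrow> s \<in> {T..T + \<epsilon>} \<Longrightarrow> \<bar>P' y s - P y s\<bar> + \<bar>Q' y s - Q y s\<bar> \<le> D"
    and D: "D \<ge> 0"
  shows "\<bar>integral {l..t} (\<lambda>s. exp (s - t) * Rf \<alpha> c P' Q' (a s) s) - integral {l..t} (\<lambda>s. exp (s - t) * Rf \<alpha> c P Q (a s) s)\<bar>
      \<le> 4 * \<alpha> * D * (t - T)"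
proof -
  have d0: "d0 \<ge> 0" using d0_pos by simp
  have den1: "1 + beta c (a s) * (P (a s) s + Q (a s) s) \<noteq> 0" if "s \<in> {l..t}" for s
  proof -
    have "P (a s) s \<ge> 0" "Q (a s) s \<ge> 0" using nn[OF ar[OF that], of s] that lt by auto
    then have "P (a s) s \<ge> - d0" "Q (a s) s \<ge> - d0" using d0 by linarith+
    then have "1 + beta c (a s) * (P (a s) s + Q (a s) s) \<ge> 1/2" by (rule den_half[OF ar[OF that]])
    then show ?thesis by linarith
  qed
  have den2: "1 + beta c (a s) * (P' (a s) s + Q' (a s) s) \<noteq> 0" if "s \<in> {l..t}" for s
  proof -
    have "P' (a s) s \<ge> - d0" "Q' (a s) s \<ge> - d0" using ng[OF ar[OF that], of s] that lt by auto
    then have "1 + beta c (a s) * (P' (a s) s + Q' (a s) s) \<ge> 1/2" by (rule den_half[OF ar[OF that]])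
    then show ?thesis by linarith
  qed
  have i1: "(\<lambda>s. exp (s - t) * Rf \<alpha> c P' Q' (a s) s) integrable_on {l..t}"
    by (rule integrable_continuous_interval, rule Rf_cont[where P=P' and Q=Q' and a=a, OF cP' cQ' cB den2])
  have i2: "(\<lambda>s. exp (s - t) * Rf \<alpha> c P Q (a s) s) integrable_on {l..t}"
    by (rule integrable_continuous_interval, rule Rf_cont[where P=P and Q=Q and a=a, OF cP cQ cB den1])
  have "integral {l..t} (\<lambda>s. exp (s - t) * Rf \<alpha> c P' Q' (a s) s) - integral {l..t} (\<lambda>s. exp (s - t) * Rf \<alpha> c P Q (a s) s)
      = integral {l..t} (\<lambda>s. exp (s - t) * Rf \<alpha> c P' Q' (a s) s - exp (s - t) * Rf \<alpha> c P Q (a s) s)"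
    by (rule integral_diff[OF i1 i2, symmetric])
  also have "\<bar>\<dots>\<bar> \<le> (4 * \<alpha> * D) * (t - T)"
  proof (rule int_split_bound[OF integrable_diff[OF i1 i2] lt(2,3)])
    show "0 \<le> 4 * \<alpha> * D" using alpha D by simp
    fix s assume s: "s \<in> {l..t}"
    then have s0: "s \<ge> 0" using lt by auto
    have y: "a s \<in> {0..1}" by (rule ar[OF s])
    {
      assume "s \<le> T"
      then have "P' (a s) s = P (a s) s" "Q' (a s) s = Q (a s) s" using eq[OF y] s0 by auto
      then show "exp (s - t) * Rf \<alpha> c P' Q' (a s) s - exp (s - t) * Rf \<alpha> c P Q (a s) s = 0"
        unfolding Rf_def by simp
    }
    {
      assume sT: "T \<le> s"
      have "\<bar>Rf \<alpha> c P Q (a s) s - Rf \<alpha> c P' Q' (a s) s\<bar> \<le> 4 * \<alpha> * (\<bar>P (a s) s - P' (a s) s\<bar> + \<bar>Q (a s) s - Q' (a s) s\<bar>)"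
        unfolding Rf_def
        apply (rule lip_R[where \<delta> = d0])
        using alpha beta_pos[OF y] nn[OF y s0] ng[OF y, of s] s lt sT beta_d0[OF y] d0 by auto
      also have "\<dots> \<le> 4 * \<alpha> * D"
        using dd[OF y, of s] s lt sT alpha by (intro mult_left_mono) (auto simp: abs_minus_commute)
      finally have r: "\<bar>Rf \<alpha> c P' Q' (a s) s - Rf \<alpha> c P Q (a s) s\<bar> \<le> 4 * \<alpha> * D" by (simp add: abs_minus_commute)
      have e: "exp (s - t) \<le> 1" using s by auto
      have "\<bar>exp (s - t) * Rf \<alpha> c P' Q' (a s) s - exp (s - t) * Rf \<alpha> c P Q (a s) s\<bar>
          = exp (s - t) * \<bar>Rf \<alpha> c P' Q' (a s) s - Rf \<alpha> c P Q (a s) s\<bar>"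
        by (simp add: right_diff_distrib[symmetric] abs_mult)
      also have "\<dots> \<le> 1 * (4 * \<alpha> * D)" using e r by (intro mult_mono) auto
      finally show "\<bar>exp (s - t) * Rf \<alpha> c P' Q' (a s) s - exp (s - t) * Rf \<alpha> c P Q (a s) s\<bar> \<le> 4 * \<alpha> * D" by simp
    }
  qed
  finally show ?thesis by simp
qed

end


context prob begin

lemma mild_cont':
  assumes sol: "mild_sol bc \<alpha> c u0 v0 U V"
  shows "continuous_on ({0..1} \<times> {0..}) (\<lambda>p. U (fst p) (snd p))" "continuous_on ({0..1} \<times> {0..}) (\<lambda>p. V (fst p) (snd p))"
  using mild_cont[OF sol] by (simp_all add: split_beta)

lemma adm_sol:
  assumes sol: "mild_sol bc \<alpha> c u0 v0 U V"
  shows "continuous_on ({0..1} \<times> {0..}) (\<lambda>(y,s). U y s)" "bc = PBC \<Longrightarrow> \<forall>s\<in>{(0::real)..}. U 0 s = U 1 s"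
    "continuous_on ({0..1} \<times> {0..}) (\<lambda>(y,s). V y s)" "bc = PBC \<Longrightarrow> \<forall>s\<in>{(0::real)..}. V 0 s = V 1 s"
  using mild_cont[OF sol] by auto

lemma Us_nn: "y \<in> {0..1} \<Longrightarrow> s \<ge> 0 \<Longrightarrow> Us y s \<ge> 0 \<and> Vs y s \<ge> 0"
  unfolding Us_def Vs_def using Ws_bounds by auto

lemma step:
  assumes sol': "mild_sol bc \<alpha> c u0 v0 U' V'"
    and T: "T \<ge> 0" "\<epsilon> > 0"
    and H0: "\<And>X s. X \<in> {0..1} \<Longrightarrow> s \<in> {0..T} \<Longrightarrow> U' X s = Us X s \<and> V' X s = Vs X s"
    and Hn: "\<And>X s. X \<in> {0..1} \<Longrightarrow> s \<in> {0..T + \<epsilon>} \<Longrightarrow> U' X s \<ge> - d0 \<and> V' X s \<ge> - d0"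
    and dd: "\<And>X s. X \<in> {0..1} \<Longrightarrow> s \<in> {T..T + \<epsilon>} \<Longrightarrow> \<bar>U' X s - Us X s\<bar> + \<bar>V' X s - Vs X s\<bar> \<le> D"
    and D: "D \<ge> 0"
    and X: "X \<in> {0..1}" and t: "t \<in> {T..T + \<epsilon>}"
  shows "\<bar>U' X t - Us X t\<bar> + \<bar>V' X t - Vs X t\<bar> \<le> 8 * \<alpha> * D * \<epsilon>"
proof -
  have t0: "t \<ge> 0" using t T by auto
  note sol = sol_mild
  have eU: "U' X t - Us X t = integral {lU X t..t} (\<lambda>s. exp (s - t) * Rf \<alpha> c U' V' (aU X t s) s)
      - integral {lU X t..t} (\<lambda>s. exp (s - t) * Rf \<alpha> c Us Vs (aU X t s) s)"
    using mild_eqs(1)[OF sol' X t0] mild_eqs(1)[OF sol X t0] by simp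
  have eV: "V' X t - Vs X t = integral {lV X t..t} (\<lambda>s. exp (s - t) * Rf \<alpha> c V' U' (aV X t s) s)
      - integral {lV X t..t} (\<lambda>s. exp (s - t) * Rf \<alpha> c Vs Us (aV X t s) s)"
    using mild_eqs(2)[OF sol' X t0] mild_eqs(2)[OF sol X t0] by simp
  have lt: "T \<le> t" "t \<le> T + \<epsilon>" using t by auto
  have bU: "\<bar>U' X t - Us X t\<bar> \<le> 4 * \<alpha> * D * (t - T)"
    unfolding eU
  proof (rule comp_bound)
    show "\<And>s. s \<in> {lU X t..t} \<Longrightarrow> aU X t s \<in> {0..1}" by (rule aU_range[OF X])
    show "0 \<le> lU X t" "lU X t \<le> t" using lU_le[OF X t0] by auto
    show "continuous_on {lU X t..t} (\<lambda>s. Us (aU X t s) s)" by (rule adm_cont(1)[OF adm_sol(1,2)[OF sol] X t0])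
    show "continuous_on {lU X t..t} (\<lambda>s. Vs (aU X t s) s)" by (rule adm_cont(1)[OF adm_sol(3,4)[OF sol] X t0])
    show "continuous_on {lU X t..t} (\<lambda>s. U' (aU X t s) s)" by (rule adm_cont(1)[OF adm_sol(1,2)[OF sol'] X t0])
    show "continuous_on {lU X t..t} (\<lambda>s. V' (aU X t s) s)" by (rule adm_cont(1)[OF adm_sol(3,4)[OF sol'] X t0])
    show "continuous_on {lU X t..t} (\<lambda>s. beta c (aU X t s))"
      using adm_cont(1)[OF beta_adm X t0] by simp
  qed (use lt Us_nn Hn H0 dd D in auto)
  have bV: "\<bar>V' X t - Vs X t\<bar> \<le> 4 * \<alpha> * D * (t - T)"
    unfolding eV
  proof (rule comp_bound)
    show "\<And>s. s \<in> {lV X t..t} \<Longrightarrow> aV X t s \<in> {0..1}" by (rule aV_range[OF X])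
    show "0 \<le> lV X t" "lV X t \<le> t" using lV_le[OF X t0] by auto
    show "continuous_on {lV X t..t} (\<lambda>s. Vs (aV X t s) s)" by (rule adm_cont(2)[OF adm_sol(3,4)[OF sol] X t0])
    show "continuous_on {lV X t..t} (\<lambda>s. Us (aV X t s) s)" by (rule adm_cont(2)[OF adm_sol(1,2)[OF sol] X t0])
    show "continuous_on {lV X t..t} (\<lambda>s. V' (aV X t s) s)" by (rule adm_cont(2)[OF adm_sol(3,4)[OF sol'] X t0])
    show "continuous_on {lV X t..t} (\<lambda>s. U' (aV X t s) s)" by (rule adm_cont(2)[OF adm_sol(1,2)[OF sol'] X t0])
    show "continuous_on {lV X t..t} (\<lambda>s. beta c (aV X t s))"
      using adm_cont(2)[OF beta_adm X t0] by simp
    show "\<And>y s. y \<in> {0..1} \<Longrightarrow> s \<in> {T..T + \<epsilon>} \<Longrightarrow> \<bar>V' y s - Vs y s\<bar> + \<bar>U' y s - Us y s\<bar> \<le> D"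
      using dd by (simp add: add.commute)
  qed (use lt Us_nn Hn H0 D in auto)
  have "4 * \<alpha> * D * (t - T) \<le> 4 * \<alpha> * D * \<epsilon>" using lt alpha D by (intro mult_left_mono) auto
  then show ?thesis using bU bV by linarith
qed

end


context prob begin

lemma uc_lower:
  fixes W :: "real \<Rightarrow> real \<Rightarrow> real" and T e :: real
  assumes cont: "continuous_on ({0..1} \<times> {0..}) (\<lambda>p. W (fst p) (snd p))" and T: "T \<ge> 0" and e: "e > 0"
  obtains d where "d > 0" "\<And>X s. X \<in> {0..1} \<Longrightarrow> T \<le> s \<Longrightarrow> s \<le> T + 1 \<Longrightarrow> s - T < d \<Longrightarrow> \<bar>W X s - W X T\<bar> < e"
proof -
  define K where "K = {0..1::real} \<times> {T..T+1}"
  have "continuous_on K (\<lambda>p. W (fst p) (snd p))"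
    by (rule continuous_on_subset[OF cont]) (use T in \<open>auto simp: K_def\<close>)
  moreover have "compact K" unfolding K_def by (intro compact_Times compact_Icc)
  ultimately have "uniformly_continuous_on K (\<lambda>p. W (fst p) (snd p))" by (rule compact_uniformly_continuous)
  then obtain d where d: "d > 0" "\<And>x x'. x \<in> K \<Longrightarrow> x' \<in> K \<Longrightarrow> dist x' x < d \<Longrightarrow> dist (W (fst x') (snd x')) (W (fst x) (snd x)) < e"
    unfolding uniformly_continuous_on_def using e by metis
  show ?thesis
  proof (rule that[OF d(1)])
    fix X s :: real assume X: "X \<in> {0..1}" and s: "T \<le> s" "s \<le> T + 1" "s - T < d"
    have "dist (X, s) (X, T) < d" using s by (simp add: dist_Pair_Pair dist_real_def)
    then have "dist (W X s) (W X T) < e" using d(2)[of "(X,T)" "(X,s)"] X s T by (auto simp: K_def)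
    then show "\<bar>W X s - W X T\<bar> < e" by (simp add: dist_real_def)
  qed
qed

lemma uniq:
  assumes sol': "mild_sol bc \<alpha> c u0 v0 U' V'"
  shows "\<forall>X\<in>{0..1}. \<forall>t\<ge>0. U' X t = Us X t \<and> V' X t = Vs X t"
proof (rule ccontr)
  assume nt: "\<not> (\<forall>X\<in>{0..1}. \<forall>t\<ge>0. U' X t = Us X t \<and> V' X t = Vs X t)"
  define B where "B = {t. 0 \<le> t \<and> (\<exists>X\<in>{0..1}. \<not> (U' X t = Us X t \<and> V' X t = Vs X t))}"
  have Bne: "B \<noteq> {}" using nt unfolding B_def by auto
  have bdd: "bdd_below B" unfolding B_def by (rule bdd_belowI[of _ 0]) auto
  define T where "T = Inf B"
  have T0: "T \<ge> 0" unfolding T_def by (rule cInf_greatest[OF Bne]) (auto simp: B_def)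
  have before: "U' X s = Us X s \<and> V' X s = Vs X s" if X: "X \<in> {0..1}" and s: "0 \<le> s" "s < T" for X s
  proof (rule ccontr)
    assume "\<not> (U' X s = Us X s \<and> V' X s = Vs X s)"
    then have "s \<in> B" unfolding B_def using X s by auto
    then have "T \<le> s" unfolding T_def by (rule cInf_lower[OF _ bdd])
    then show False using s by simp
  qed
  note sol = sol_mild
  have atT: "U' X T = Us X T \<and> V' X T = Vs X T" if X: "X \<in> {0..1}" for X
  proof (cases "T = 0")
    case True
    have l: "lU X 0 = 0" "lV X 0 = 0" using lU_le[OF X, of 0] lV_le[OF X, of 0] by auto
    show ?thesis using mild_eqs[OF sol' X, of 0] mild_eqs[OF sol X, of 0] True l by simp
  next
    case False
    then have Tp: "0 < T" using T0 by simp
    have cl: "closure {0..<T} = {0..T}" using Tp by simp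
    have cX: "continuous_on {0..T} (\<lambda>s. W (X, s))" if "continuous_on ({0..1} \<times> {0..}) W" for W :: "real \<times> real \<Rightarrow> real"
      by (rule continuous_on_compose2[OF that]) (use X in \<open>auto intro!: continuous_intros\<close>)
    have c1: "continuous_on {0..T} (\<lambda>s. U' X s - Us X s)"
      using cX[OF mild_cont'(1)[OF sol']] cX[OF mild_cont'(1)[OF sol]] by (auto intro: continuous_on_diff)
    have c2: "continuous_on {0..T} (\<lambda>s. V' X s - Vs X s)"
      using cX[OF mild_cont'(2)[OF sol']] cX[OF mild_cont'(2)[OF sol]] by (auto intro: continuous_on_diff)
    have "(\<lambda>s. U' X s - Us X s) T = 0"
      by (rule continuous_constant_on_closure[of "{0..<T}"]) (use c1 cl before[OF X] Tp in auto)
    moreover have "(\<lambda>s. V' X s - Vs X s) T = 0"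
      by (rule continuous_constant_on_closure[of "{0..<T}"]) (use c2 cl before[OF X] Tp in auto)
    ultimately show ?thesis by simp
  qed
  have H0: "U' X s = Us X s \<and> V' X s = Vs X s" if "X \<in> {0..1}" "s \<in> {0..T}" for X s
    using before atT that by (cases "s = T") auto
  have d0p: "d0 > 0" by (rule d0_pos)
  obtain dU where dU: "dU > 0" "\<And>X s. X \<in> {0..1} \<Longrightarrow> T \<le> s \<Longrightarrow> s \<le> T + 1 \<Longrightarrow> s - T < dU \<Longrightarrow> \<bar>U' X s - U' X T\<bar> < d0"
    using uc_lower[OF mild_cont'(1)[OF sol'] T0 d0p] by metis
  obtain dV where dV: "dV > 0" "\<And>X s. X \<in> {0..1} \<Longrightarrow> T \<le> s \<Longrightarrow> s \<le> T + 1 \<Longrightarrow> s - T < dV \<Longrightarrow> \<bar>V' X s - V' X T\<bar> < d0"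
    using uc_lower[OF mild_cont'(2)[OF sol'] T0 d0p] by metis
  define \<epsilon> where "\<epsilon> = min (min (min dU dV / 2) 1) (1 / (16 * \<alpha> + 1))"
  have ep: "\<epsilon> > 0" "\<epsilon> \<le> 1" "\<epsilon> < dU" "\<epsilon> < dV" "\<epsilon> \<le> 1 / (16 * \<alpha> + 1)"
    unfolding \<epsilon>_def using dU dV alpha by auto
  have ae: "8 * \<alpha> * \<epsilon> \<le> 1/2"
  proof -
    have "(16 * \<alpha> + 1) * \<epsilon> \<le> 1" using ep(5) alpha by (simp add: field_simps)
    then show ?thesis using ep(1) by (simp add: algebra_simps)
  qed
  have Hn: "U' X s \<ge> - d0 \<and> V' X s \<ge> - d0" if X: "X \<in> {0..1}" and s: "s \<in> {0..T + \<epsilon>}" for X s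
  proof (cases "s \<le> T")
    case True
    then show ?thesis using H0[OF X] s Us_nn[OF X, of s] d0p by force
  next
    case False
    have u: "\<bar>U' X s - U' X T\<bar> < d0" by (rule dU(2)[OF X]) (use False s ep in auto)
    have v: "\<bar>V' X s - V' X T\<bar> < d0" by (rule dV(2)[OF X]) (use False s ep in auto)
    have "U' X T \<ge> 0" "V' X T \<ge> 0" using atT[OF X] Us_nn[OF X T0] by auto
    then show ?thesis using u v by linarith
  qed
  define K where "K = {0..1::real} \<times> {T..T + \<epsilon>}"
  define \<Delta> where "\<Delta> p = \<bar>U' (fst p) (snd p) - Us (fst p) (snd p)\<bar> + \<bar>V' (fst p) (snd p) - Vs (fst p) (snd p)\<bar>" for p
  have Kc: "compact K" unfolding K_def by (intro compact_Times compact_Icc)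
  have KS: "K \<subseteq> {0..1} \<times> {0..}" unfolding K_def using T0 by auto
  have cD: "continuous_on K \<Delta>" unfolding \<Delta>_def
    by (intro continuous_intros continuous_on_subset[OF mild_cont'(1)[OF sol'] KS] continuous_on_subset[OF mild_cont'(1)[OF sol] KS]
        continuous_on_subset[OF mild_cont'(2)[OF sol'] KS] continuous_on_subset[OF mild_cont'(2)[OF sol] KS])
  have bddD: "bdd_above (\<Delta> ` K)"
    by (intro bounded_imp_bdd_above compact_imp_bounded compact_continuous_image cD Kc)
  have Kne: "K \<noteq> {}" unfolding K_def using ep by auto
  define D where "D = Sup (\<Delta> ` K)"
  have Dle: "\<Delta> p \<le> D" if "p \<in> K" for p unfolding D_def by (rule cSup_upper) (use that bddD in auto)
  have D0: "D \<ge> 0"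
  proof -
    have "(0, T) \<in> K" unfolding K_def using ep by auto
    then show ?thesis using Dle[of "(0,T)"] unfolding \<Delta>_def by (smt (verit) abs_ge_zero)
  qed
  have stp: "\<Delta> p \<le> 8 * \<alpha> * D * \<epsilon>" if "p \<in> K" for p
  proof -
    obtain X s where p: "p = (X, s)" by force
    have "\<bar>U' X s - Us X s\<bar> + \<bar>V' X s - Vs X s\<bar> \<le> 8 * \<alpha> * D * \<epsilon>"
    proof (rule step[OF sol' T0 ep(1) H0 Hn _ D0])
      show "\<And>X s. X \<in> {0..1} \<Longrightarrow> s \<in> {T..T + \<epsilon>} \<Longrightarrow> \<bar>U' X s - Us X s\<bar> + \<bar>V' X s - Vs X s\<bar> \<le> D"
        using Dle unfolding K_def \<Delta>_def by force
      show "X \<in> {0..1}" "s \<in> {T..T + \<epsilon>}" using that p unfolding K_def by auto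
    qed
    then show ?thesis unfolding \<Delta>_def p by simp
  qed
  have "D \<le> 8 * \<alpha> * D * \<epsilon>" unfolding D_def
    by (rule cSup_least) (use Kne stp D_def in auto)
  moreover have "8 * \<alpha> * D * \<epsilon> \<le> 1/2 * D" using ae D0
    by (metis mult.commute mult.left_commute mult_right_mono)
  ultimately have "D \<le> 0" by linarith
  then have Dz: "\<Delta> p = 0" if "p \<in> K" for p using Dle[OF that] unfolding \<Delta>_def by (smt (verit) abs_ge_zero)
  have "T < T + \<epsilon>" using ep by simp
  then have "\<exists>x\<in>B. x < T + \<epsilon>" using cInf_less_iff[OF Bne bdd, of "T + \<epsilon>"] unfolding T_def by simp
  then obtain b where b: "b \<in> B" "b < T + \<epsilon>" by auto
  have bT: "T \<le> b" unfolding T_def by (rule cInf_lower[OF b(1) bdd])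
  from b(1) obtain X where X: "X \<in> {0..1}" and ne: "\<not> (U' X b = Us X b \<and> V' X b = Vs X b)" unfolding B_def by auto
  have "(X, b) \<in> K" unfolding K_def using X b bT by auto
  from Dz[OF this] have "\<bar>U' X b - Us X b\<bar> + \<bar>V' X b - Vs X b\<bar> = 0" unfolding \<Delta>_def by simp
  then have "U' X b = Us X b \<and> V' X b = Vs X b" by (smt (verit) abs_ge_zero abs_eq_0)
  then show False using ne by simp
qed

end


context prob begin

lemma phys_bounds: assumes x: "x \<in> {0..1}" and t: "t \<ge> 0"
  shows "0 \<le> phys c Us x t \<and> phys c Us x t \<le> cu / cl * max Su \<alpha> \<and>
         0 \<le> phys c Vs x t \<and> phys c Vs x t \<le> cu / cl * max Sv \<alpha>"
proof -
  have cx: "cl \<le> c x" "c x > 0" using cb[OF x] c_pos[OF x] by auto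
  have gen: "0 \<le> C / c x * w \<and> C / c x * w \<le> cu / cl * m" if w: "0 \<le> w" "w \<le> cu / C * m" and m: "m \<ge> 0" for w m
  proof
    show "0 \<le> C / c x * w" using w cx C_pos by simp
    have "C / c x * w \<le> C / c x * (cu / C * m)" using w cx C_pos by (intro mult_left_mono) auto
    also have "\<dots> = cu * m / c x" using C_pos by simp
    also have "\<dots> \<le> cu * m / cl" using cx cl cu_pos m by (intro divide_left_mono) auto
    finally show "C / c x * w \<le> cu / cl * m" by simp
  qed
  have X: "Xmap c x \<in> {0..1}" by (rule Xmap_range[OF x])
  have mu: "max Su \<alpha> \<ge> 0" "max Sv \<alpha> \<ge> 0" using alpha by auto
  have "0 \<le> Us (Xmap c x) t" "Us (Xmap c x) t \<le> cu / C * max Su \<alpha>"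
    "0 \<le> Vs (Xmap c x) t" "Vs (Xmap c x) t \<le> cu / C * max Sv \<alpha>"
    using Ws_bounds[OF t, of "Xmap c x"] unfolding Us_def Vs_def Mu_def Mv_def by auto
  then show ?thesis unfolding phys_def C_def[symmetric] using gen mu by blast
qed

end

theorem proposition3p1:
  fixes bc :: bcond and \<alpha> cl cu :: real and c u0 v0 :: "real \<Rightarrow> real"
  assumes "\<alpha> \<ge> 0"
    and "continuous_on {0..1} u0" and "continuous_on {0..1} v0" and "continuous_on {0..1} c"
    and "\<forall>x\<in>{0..1}. u0 x \<ge> 0 \<and> v0 x \<ge> 0"
    and "0 < cl" and "\<forall>x\<in>{0..1}. cl \<le> c x \<and> c x \<le> cu"
    and "compat bc c u0 v0"
  shows "\<exists>U V. mild_sol bc \<alpha> c u0 v0 U V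
      \<and> (\<forall>U' V'. mild_sol bc \<alpha> c u0 v0 U' V' \<longrightarrow>
            (\<forall>X\<in>{0..1}. \<forall>t\<ge>0. U' X t = U X t \<and> V' X t = V X t))
      \<and> (\<forall>x\<in>{0..1}. \<forall>t\<ge>0.
            0 \<le> phys c U x t \<and> phys c U x t \<le> cu / cl * max (Sup (u0 ` {0..1})) \<alpha> \<and>
            0 \<le> phys c V x t \<and> phys c V x t \<le> cu / cl * max (Sup (v0 ` {0..1})) \<alpha>)"
proof -
  interpret p: prob c cl cu bc \<alpha> u0 v0
    by unfold_locales (use assms in auto)
  show ?thesis
    apply (rule exI[of _ p.Us], rule exI[of _ p.Vs])
    using p.sol_mild p.uniq p.phys_bounds unfolding p.Su_def p.Sv_def by blast
qed


end
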